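(* Let $m\ge 3$ be odd. There is no monic polynomial $g\in\mathbb{Z}[X]$ of degree $m$ such that $f(X)=g(X^2)$ is irreducible over $\mathbb{Q}$, monogenic, and has Galois group $\mathrm{Gal}(f/\mathbb{Q})$ isomorphic to the dihedral group $D_m$ of order $2m$ (acting regularly on the $2m$ roots of $f$).
   Context: A monic irreducible polynomial $f\in\mathbb{Z}[X]$ with a root $\alpha$ is called monogenic if $\mathbb{Z}[\alpha]$ equals the full ring of integers of $\mathbb{Q}(\alpha)$. $\mathrm{Gal}(f/\mathbb{Q})$ is the Galois group of the splitting field of $f$ over $\mathbb{Q}$. *)

theory Defs
  imports "HOL-Computational_Algebra.Computational_Algebra" "HOL-Algebra.Group" "HOL-Library.FuncSet" Complex_Main
begin

definition int_poly_roots :: "int poly \<Rightarrow> complex set" where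
  "int_poly_roots f = {z. poly (map_poly of_int f) z = 0}"

definition complex_subfield :: "complex set \<Rightarrow> bool" where
  "complex_subfield K \<longleftrightarrow> 0 \<in> K \<and> 1 \<in> K \<and>
     (\<forall>x\<in>K. \<forall>y\<in>K. x + y \<in> K \<and> x - y \<in> K \<and> x * y \<in> K) \<and>
     (\<forall>x\<in>K. x \<noteq> 0 \<longrightarrow> inverse x \<in> K)"

definition splitting_field :: "int poly \<Rightarrow> complex set" where
  "splitting_field f = \<Inter> {K. complex_subfield K \<and> int_poly_roots f \<subseteq> K}"

text \<open>Field automorphisms of a subfield K (they automatically fix the rationals).\<close>
definition field_auts :: "complex set \<Rightarrow> (complex \<Rightarrow> complex) set" where
  "field_auts K = {\<sigma>. \<sigma> \<in> extensional K \<and> bij_betw \<sigma> K K \<and> \<sigma> 1 = 1 \<and>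
      (\<forall>x\<in>K. \<forall>y\<in>K. \<sigma> (x + y) = \<sigma> x + \<sigma> y \<and> \<sigma> (x * y) = \<sigma> x * \<sigma> y)}"

definition gal_group :: "int poly \<Rightarrow> (complex \<Rightarrow> complex) monoid" where
  "gal_group f = \<lparr>carrier = field_auts (splitting_field f),
                  monoid.mult = (\<lambda>\<sigma> \<tau>. compose (splitting_field f) \<sigma> \<tau>),
                  one = restrict id (splitting_field f)\<rparr>"

text \<open>Dihedral group D_m of order 2m: element (a, s) stands for r^a s^s, with
  r^a s^x * r^b s^y = r^(a + (-1)^x b) s^(x+y).\<close>
definition dihedral_group :: "nat \<Rightarrow> (int \<times> bool) monoid" where
  "dihedral_group m = \<lparr>carrier = {0..<int m} \<times> UNIV,
     monoid.mult = (\<lambda>(a, x) (b, y). ((a + (if x then - b else b)) mod int m, x \<noteq> y)),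
     one = (0, False)\<rparr>"

definition rat_adjoin :: "complex \<Rightarrow> complex set" where
  "rat_adjoin \<alpha> = {poly (map_poly of_rat p) \<alpha> | p :: rat poly. True}"

definition int_adjoin :: "complex \<Rightarrow> complex set" where
  "int_adjoin \<alpha> = {poly (map_poly of_int p) \<alpha> | p :: int poly. True}"

definition monogenic :: "int poly \<Rightarrow> bool" where
  "monogenic f \<longleftrightarrow> lead_coeff f = 1 \<and> irreducible (map_poly of_int f :: rat poly) \<and>
     (\<exists>\<alpha>. poly (map_poly of_int f) \<alpha> = (0::complex) \<and>
          int_adjoin \<alpha> = {x \<in> rat_adjoin \<alpha>. algebraic_int x})"

end

theory Submission imports Defs "HOL-Computational_Algebra.Field_as_Ring" begin

lemma hom_sum_gen:
  fixes f :: "'a::comm_ring_1 \<Rightarrow> 'b::comm_ring_1"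
  assumes "\<And>x y. f (x + y) = f x + f y" "f 0 = 0"
  shows "f (sum g A) = sum (\<lambda>i. f (g i)) A"
  by (induction A rule: infinite_finite_induct) (simp_all add: assms)

lemma mp_add_gen:
  fixes f :: "'a::comm_ring_1 \<Rightarrow> 'b::comm_ring_1"
  assumes "\<And>x y. f (x + y) = f x + f y" "f 0 = 0"
  shows "map_poly f (p + q) = map_poly f p + map_poly f q"
  by (intro poly_eqI) (simp add: coeff_map_poly assms)

lemma mp_mult_gen:
  fixes f :: "'a::comm_ring_1 \<Rightarrow> 'b::comm_ring_1"
  assumes "\<And>x y. f (x + y) = f x + f y" "\<And>x y. f (x * y) = f x * f y" "f 0 = 0"
  shows "map_poly f (p * q) = map_poly f p * map_poly f q"
  by (intro poly_eqI) (simp add: coeff_map_poly assms coeff_mult hom_sum_gen[of f, OF assms(1,3)])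

lemma mp_of_int_add: "map_poly (of_int :: int \<Rightarrow> 'b::comm_ring_1) (p + q) = map_poly of_int p + map_poly of_int q"
  by (rule mp_add_gen) auto
lemma mp_of_int_mult: "map_poly (of_int :: int \<Rightarrow> 'b::comm_ring_1) (p * q) = map_poly of_int p * map_poly of_int q"
  by (rule mp_mult_gen) auto
lemma mp_of_int_diff: "map_poly (of_int :: int \<Rightarrow> 'b::comm_ring_1) (p - q) = map_poly of_int p - map_poly of_int q"
  by (intro poly_eqI) (simp add: coeff_map_poly)
lemma mp_of_int_const: "map_poly (of_int :: int \<Rightarrow> 'b::comm_ring_1) [:c:] = [:of_int c:]"
  by (simp add: map_poly_pCons)

lemma poly_of_int_pcompose:
  "poly (map_poly (of_int :: int \<Rightarrow> 'b::comm_ring_1) (pcompose p q)) x =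
   poly (map_poly of_int p) (poly (map_poly of_int q) x)"
proof (induction p)
  case 0 then show ?case by simp
next
  case (pCons a p)
  show ?case
    by (simp add: pcompose_pCons mp_of_int_add mp_of_int_mult mp_of_int_const map_poly_pCons pCons.IH)
qed

abbreviation subf where "subf \<equiv> complex_subfield"

lemma sf_0: "subf E \<Longrightarrow> 0 \<in> E" and sf_1: "subf E \<Longrightarrow> 1 \<in> E"
  by (auto simp: complex_subfield_def)
lemma sf_add: "subf E \<Longrightarrow> x \<in> E \<Longrightarrow> y \<in> E \<Longrightarrow> x + y \<in> E"
  and sf_diff: "subf E \<Longrightarrow> x \<in> E \<Longrightarrow> y \<in> E \<Longrightarrow> x - y \<in> E"
  and sf_mult: "subf E \<Longrightarrow> x \<in> E \<Longrightarrow> y \<in> E \<Longrightarrow> x * y \<in> E"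
  by (auto simp: complex_subfield_def)
lemma sf_inverse: "subf E \<Longrightarrow> x \<in> E \<Longrightarrow> inverse x \<in> E"
  by (cases "x = 0") (auto simp: complex_subfield_def)
lemma sf_uminus: "subf E \<Longrightarrow> x \<in> E \<Longrightarrow> - x \<in> E"
  using sf_diff[of E 0 x] sf_0[of E] by simp
lemma sf_divide: "subf E \<Longrightarrow> x \<in> E \<Longrightarrow> y \<in> E \<Longrightarrow> x / y \<in> E"
  by (simp add: divide_inverse sf_mult sf_inverse)
lemma sf_power: "subf E \<Longrightarrow> x \<in> E \<Longrightarrow> x ^ n \<in> E"
  by (induction n) (auto intro: sf_mult sf_1)
lemma sf_of_nat: "subf E \<Longrightarrow> of_nat n \<in> E"
  by (induction n) (auto intro: sf_add sf_1 sf_0)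
lemma sf_of_int: assumes "subf E" shows "of_int n \<in> E"
proof (cases "n \<ge> 0")
  case True then show ?thesis using sf_of_nat[OF assms, of "nat n"] by simp
next
  case False then show ?thesis using sf_uminus[OF assms sf_of_nat[OF assms, of "nat (- n)"]] by simp
qed
lemma sf_Rats: "subf E \<Longrightarrow> x \<in> \<rat> \<Longrightarrow> x \<in> E"
  by (erule Rats_cases') (auto intro: sf_divide sf_of_int)
lemma sf_sum: "subf E \<Longrightarrow> (\<And>i. i \<in> A \<Longrightarrow> g i \<in> E) \<Longrightarrow> sum g A \<in> E"
  by (induction A rule: infinite_finite_induct) (auto intro: sf_add sf_0)
lemma sf_Rats_subf: "subf \<rat>"
  by (auto simp: complex_subfield_def)
lemma sf_UNIV: "subf UNIV"
  by (auto simp: complex_subfield_def)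

definition Epoly :: "complex set \<Rightarrow> complex poly \<Rightarrow> bool" where
  "Epoly E p \<longleftrightarrow> (\<forall>i. coeff p i \<in> E)"

lemma Epoly_0: "subf E \<Longrightarrow> Epoly E 0"
  by (simp add: Epoly_def sf_0)
lemma Epoly_const: "subf E \<Longrightarrow> c \<in> E \<Longrightarrow> Epoly E [:c:]"
  by (simp add: Epoly_def coeff_pCons sf_0 split: nat.splits)
lemma Epoly_pCons: "subf E \<Longrightarrow> c \<in> E \<Longrightarrow> Epoly E p \<Longrightarrow> Epoly E (pCons c p)"
  by (simp add: Epoly_def coeff_pCons split: nat.splits)
lemma Epoly_pCons_iff: "Epoly E (pCons c p) \<longleftrightarrow> c \<in> E \<and> Epoly E p"
  apply (simp add: Epoly_def coeff_pCons split: nat.splits)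
  by (metis coeff_pCons_0 coeff_pCons_Suc)
lemma Epoly_add: "subf E \<Longrightarrow> Epoly E p \<Longrightarrow> Epoly E q \<Longrightarrow> Epoly E (p + q)"
  by (simp add: Epoly_def sf_add)
lemma Epoly_diff: "subf E \<Longrightarrow> Epoly E p \<Longrightarrow> Epoly E q \<Longrightarrow> Epoly E (p - q)"
  by (simp add: Epoly_def sf_diff)
lemma Epoly_uminus: "subf E \<Longrightarrow> Epoly E p \<Longrightarrow> Epoly E (- p)"
  by (simp add: Epoly_def sf_uminus)
lemma Epoly_mult: "subf E \<Longrightarrow> Epoly E p \<Longrightarrow> Epoly E q \<Longrightarrow> Epoly E (p * q)"
  unfolding Epoly_def coeff_mult by (auto intro!: sf_sum sf_mult)
lemma Epoly_smult: "subf E \<Longrightarrow> c \<in> E \<Longrightarrow> Epoly E p \<Longrightarrow> Epoly E (smult c p)"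
  by (simp add: Epoly_def sf_mult)
lemma Epoly_monom: "subf E \<Longrightarrow> c \<in> E \<Longrightarrow> Epoly E (monom c n)"
  by (simp add: Epoly_def coeff_monom sf_0)
lemma Epoly_mono: "Epoly E p \<Longrightarrow> E \<subseteq> F \<Longrightarrow> Epoly F p"
  by (auto simp: Epoly_def)
lemma Epoly_of_int: "subf E \<Longrightarrow> Epoly E (map_poly of_int p)"
  by (simp add: Epoly_def coeff_map_poly sf_of_int)
lemma Epoly_X: "subf E \<Longrightarrow> Epoly E [:0, 1:]"
  by (simp add: Epoly_pCons Epoly_const sf_0 sf_1)
lemma sf_poly: "subf E \<Longrightarrow> Epoly E p \<Longrightarrow> x \<in> E \<Longrightarrow> poly p x \<in> E"
  by (induction p) (auto simp: Epoly_pCons_iff intro: sf_add sf_mult sf_0)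


section \<open>Field homomorphisms\<close>

definition fhom :: "complex set \<Rightarrow> (complex \<Rightarrow> complex) \<Rightarrow> bool" where
  "fhom E \<psi> \<longleftrightarrow> \<psi> 1 = 1 \<and> (\<forall>x\<in>E. \<forall>y\<in>E. \<psi> (x + y) = \<psi> x + \<psi> y \<and> \<psi> (x * y) = \<psi> x * \<psi> y)"

context
  fixes E :: "complex set" and \<psi> :: "complex \<Rightarrow> complex"
  assumes E: "subf E" and h: "fhom E \<psi>"
begin

lemma fh_1: "\<psi> 1 = 1" using h by (simp add: fhom_def)
lemma fh_add: "x \<in> E \<Longrightarrow> y \<in> E \<Longrightarrow> \<psi> (x + y) = \<psi> x + \<psi> y" using h by (simp add: fhom_def)
lemma fh_mult: "x \<in> E \<Longrightarrow> y \<in> E \<Longrightarrow> \<psi> (x * y) = \<psi> x * \<psi> y" using h by (simp add: fhom_def)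
lemma fh_0: "\<psi> 0 = 0"
  using fh_add[OF sf_0[OF E] sf_0[OF E]] by simp
lemma fh_uminus: "x \<in> E \<Longrightarrow> \<psi> (- x) = - \<psi> x"
proof -
  assume x: "x \<in> E"
  have "\<psi> x + \<psi> (- x) = 0" using fh_add[OF x sf_uminus[OF E x]] fh_0 by simp
  have "\<psi> (- x) = (\<psi> x + \<psi> (- x)) - \<psi> x" by simp
  also have "\<dots> = 0 - \<psi> x" by (simp only: \<open>\<psi> x + \<psi> (- x) = 0\<close>)
  also have "\<dots> = - \<psi> x" by simp
  finally show ?thesis .
qed
lemma fh_diff: "x \<in> E \<Longrightarrow> y \<in> E \<Longrightarrow> \<psi> (x - y) = \<psi> x - \<psi> y"
  using fh_add[of x "- y"] fh_uminus[of y] sf_uminus[OF E, of y] by simp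
lemma fh_sum: "(\<And>i. i \<in> A \<Longrightarrow> g i \<in> E) \<Longrightarrow> \<psi> (sum g A) = sum (\<lambda>i. \<psi> (g i)) A"
proof (induction A rule: infinite_finite_induct)
  case (insert x F)
  then show ?case by (simp add: fh_add sf_sum[OF E])
qed (simp_all add: fh_0)
lemma fh_of_nat: "\<psi> (of_nat n) = of_nat n"
  by (induction n) (simp_all add: fh_0 fh_1 fh_add sf_of_nat[OF E] sf_1[OF E])
lemma fh_of_int: "\<psi> (of_int n) = of_int n"
proof (cases "n \<ge> 0")
  case True then show ?thesis using fh_of_nat[of "nat n"] by simp
next
  case False then show ?thesis using fh_uminus[OF sf_of_nat[OF E, of "nat (- n)"]] fh_of_nat[of "nat (-n)"] by simp
qed
lemma fh_inverse_mult: "x \<in> E \<Longrightarrow> x \<noteq> 0 \<Longrightarrow> \<psi> x * \<psi> (inverse x) = 1"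
  using fh_mult[of x "inverse x"] sf_inverse[OF E, of x] fh_1 by simp
lemma fh_nz: "x \<in> E \<Longrightarrow> x \<noteq> 0 \<Longrightarrow> \<psi> x \<noteq> 0"
  using fh_inverse_mult by force
lemma fh_inverse: "x \<in> E \<Longrightarrow> \<psi> (inverse x) = inverse (\<psi> x)"
proof (cases "x = 0")
  case True then show ?thesis by (simp add: fh_0)
next
  case False
  assume x: "x \<in> E"
  have "\<psi> x * \<psi> (inverse x) = 1" "\<psi> x \<noteq> 0" using fh_inverse_mult[OF x False] fh_nz[OF x False] by auto
  then show ?thesis using inverse_unique[of "\<psi> x" "\<psi> (inverse x)"] by simp
qed
lemma fh_divide: "x \<in> E \<Longrightarrow> y \<in> E \<Longrightarrow> \<psi> (x / y) = \<psi> x / \<psi> y"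
  by (simp add: divide_inverse fh_mult fh_inverse sf_inverse[OF E])
lemma fh_Rats: "x \<in> \<rat> \<Longrightarrow> \<psi> x = x"
  by (erule Rats_cases') (simp add: fh_divide fh_of_int sf_of_int[OF E])
lemma fh_power: "x \<in> E \<Longrightarrow> \<psi> (x ^ n) = \<psi> x ^ n"
  by (induction n) (simp_all add: fh_1 fh_mult sf_power[OF E])
lemma fh_inj: "inj_on \<psi> E"
proof (rule inj_onI)
  fix x y assume "x \<in> E" "y \<in> E" "\<psi> x = \<psi> y"
  then have "\<psi> (x - y) = 0" by (simp add: fh_diff)
  then show "x = y" using fh_nz[of "x - y"] sf_diff[OF E \<open>x \<in> E\<close> \<open>y \<in> E\<close>] by auto
qed

lemma mpE_add: "Epoly E p \<Longrightarrow> Epoly E q \<Longrightarrow> map_poly \<psi> (p + q) = map_poly \<psi> p + map_poly \<psi> q"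
  by (intro poly_eqI) (simp add: coeff_map_poly fh_0 fh_add Epoly_def)
lemma mpE_diff: "Epoly E p \<Longrightarrow> Epoly E q \<Longrightarrow> map_poly \<psi> (p - q) = map_poly \<psi> p - map_poly \<psi> q"
  by (intro poly_eqI) (simp add: coeff_map_poly fh_0 fh_diff Epoly_def)
lemma mpE_mult: "Epoly E p \<Longrightarrow> Epoly E q \<Longrightarrow> map_poly \<psi> (p * q) = map_poly \<psi> p * map_poly \<psi> q"
  by (intro poly_eqI) (simp add: coeff_map_poly fh_0 coeff_mult fh_sum fh_mult Epoly_def sf_mult[OF E])
lemma mpE_const: "map_poly \<psi> [:c:] = [:\<psi> c:]"
  by (simp add: map_poly_pCons fh_0)
lemma mpE_coeff: "coeff (map_poly \<psi> p) n = \<psi> (coeff p n)"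
  by (simp add: coeff_map_poly fh_0)
lemma mpE_degree: assumes "Epoly E p" shows "degree (map_poly \<psi> p) = degree p"
proof (cases "p = 0")
  case True then show ?thesis by simp
next
  case False
  have "degree (map_poly \<psi> p) \<le> degree p"
    by (rule degree_le) (simp add: mpE_coeff coeff_eq_0 fh_0)
  moreover have "coeff (map_poly \<psi> p) (degree p) \<noteq> 0"
    using False assms by (simp add: mpE_coeff Epoly_def fh_nz)
  then have "degree p \<le> degree (map_poly \<psi> p)" by (rule le_degree)
  ultimately show ?thesis by simp
qed
lemma mpE_nz: "Epoly E p \<Longrightarrow> p \<noteq> 0 \<Longrightarrow> map_poly \<psi> p \<noteq> 0"
  by (metis Epoly_def fh_nz leading_coeff_0_iff mpE_coeff mpE_degree)
lemma mpE_poly: "Epoly E p \<Longrightarrow> x \<in> E \<Longrightarrow> \<psi> (poly p x) = poly (map_poly \<psi> p) (\<psi> x)"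
proof (induction p)
  case 0 then show ?case by (simp add: fh_0)
next
  case (pCons a p)
  then have "a \<in> E" "Epoly E p" by (simp_all add: Epoly_pCons_iff)
  then show ?case using pCons
    by (simp add: map_poly_pCons fh_0 fh_add fh_mult sf_mult[OF E] sf_poly[OF E])
qed
lemma mpE_of_int: "map_poly \<psi> (map_poly of_int p) = map_poly of_int p"
  by (intro poly_eqI) (simp add: coeff_map_poly fh_0 fh_of_int)

end

lemma deg_cancel:
  fixes p q :: "complex poly"
  assumes "degree p = n" "degree q = n" "lead_coeff p = lead_coeff q"
  shows "p - q = 0 \<or> degree (p - q) < n"
proof (rule ccontr)
  assume *: "\<not> (p - q = 0 \<or> degree (p - q) < n)"
  have "degree (p - q) \<le> n" using degree_diff_le[of p n q] assms by simp
  with * have d: "degree (p - q) = n" by simp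
  then have "lead_coeff (p - q) = coeff p n - coeff q n" by simp
  also have "\<dots> = 0" using assms by simp
  finally have "lead_coeff (p - q) = 0" .
  then show False using * leading_coeff_0_iff by blast
qed

lemma Ediv:
  assumes E: "subf E" and b: "Epoly E b" "b \<noteq> 0"
  shows "Epoly E a \<Longrightarrow> \<exists>s r. Epoly E s \<and> Epoly E r \<and> a = s * b + r \<and> (r = 0 \<or> degree r < degree b)"
proof (induction "degree a" arbitrary: a rule: less_induct)
  case less
  show ?case
  proof (cases "a = 0 \<or> degree a < degree b")
    case True
    then show ?thesis using less.prems Epoly_0[OF E] by (intro exI[of _ 0] exI[of _ a]) auto
  next
    case False
    then have a0: "a \<noteq> 0" and dab: "degree b \<le> degree a" by auto
    define c where "c = lead_coeff a / lead_coeff b"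
    define k where "k = degree a - degree b"
    have cE: "c \<in> E" unfolding c_def using less.prems b by (auto simp: Epoly_def intro: sf_divide[OF E])
    have c0: "c \<noteq> 0" using a0 b by (simp add: c_def)
    have dm: "degree (monom c k * b) = degree a"
    proof -
      have "degree (monom c k) = k" using c0 by (simp add: degree_monom_eq)
      moreover have "monom c k \<noteq> 0" using c0 by simp
      ultimately show ?thesis using b dab by (simp add: degree_mult_eq k_def del: mult_monom)
    qed
    have lm: "lead_coeff (monom c k * b) = lead_coeff a"
    proof -
      have "lead_coeff (monom c k) = c" using c0 by (simp add: degree_monom_eq)
      then show ?thesis using b by (simp add: lead_coeff_mult c_def del: mult_monom)
    qed
    define a' where "a' = a - monom c k * b"
    have Ea': "Epoly E a'" unfolding a'_def
      by (intro Epoly_diff Epoly_mult Epoly_monom E less.prems b cE)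
    have "a' = 0 \<or> degree a' < degree a"
      unfolding a'_def by (rule deg_cancel) (use dm lm in auto)
    then show ?thesis
    proof
      assume "a' = 0"
      then show ?thesis using Epoly_monom[OF E cE, of k] Epoly_0[OF E]
        by (intro exI[of _ "monom c k"] exI[of _ 0]) (simp add: a'_def)
    next
      assume "degree a' < degree a"
      from less.hyps[OF this Ea'] obtain s r where sr: "Epoly E s" "Epoly E r" "a' = s * b + r"
        "r = 0 \<or> degree r < degree b" by blast
      show ?thesis
        using sr Epoly_add[OF E sr(1) Epoly_monom[OF E cE, of k]]
        by (intro exI[of _ "s + monom c k"] exI[of _ r]) (auto simp: a'_def algebra_simps)
    qed
  qed
qed


section \<open>Minimal polynomials and simple extensions\<close>

definition is_minpoly :: "complex set \<Rightarrow> complex \<Rightarrow> complex poly \<Rightarrow> bool" where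
  "is_minpoly E \<gamma> \<mu> \<longleftrightarrow> Epoly E \<mu> \<and> \<mu> \<noteq> 0 \<and> poly \<mu> \<gamma> = 0 \<and>
     (\<forall>p. Epoly E p \<and> p \<noteq> 0 \<and> poly p \<gamma> = 0 \<longrightarrow> degree \<mu> \<le> degree p)"

definition adj :: "complex set \<Rightarrow> complex \<Rightarrow> complex set" where
  "adj E \<gamma> = {poly p \<gamma> | p. Epoly E p}"

lemma minpoly_exists:
  assumes "Epoly E p" "p \<noteq> 0" "poly p \<gamma> = 0"
  shows "\<exists>\<mu>. is_minpoly E \<gamma> \<mu>"
proof -
  define P where "P n \<longleftrightarrow> (\<exists>p. Epoly E p \<and> p \<noteq> 0 \<and> poly p \<gamma> = 0 \<and> degree p = n)" for n
  have "P (degree p)" using assms unfolding P_def by blast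
  then have "P (LEAST n. P n)" by (rule LeastI)
  then obtain \<mu> where \<mu>: "Epoly E \<mu>" "\<mu> \<noteq> 0" "poly \<mu> \<gamma> = 0" "degree \<mu> = (LEAST n. P n)"
    unfolding P_def by blast
  have "degree \<mu> \<le> degree q" if "Epoly E q" "q \<noteq> 0" "poly q \<gamma> = 0" for q
    unfolding \<mu>(4) by (rule Least_le) (use that in \<open>auto simp: P_def\<close>)
  then show ?thesis using \<mu> unfolding is_minpoly_def by blast
qed

context
  fixes E :: "complex set" and \<gamma> :: complex and \<mu> :: "complex poly"
  assumes E: "subf E" and mu: "is_minpoly E \<gamma> \<mu>"
begin

lemma mu_Epoly: "Epoly E \<mu>" and mu_nz: "\<mu> \<noteq> 0" and mu_root: "poly \<mu> \<gamma> = 0"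
  using mu by (auto simp: is_minpoly_def)
lemma mu_min: "Epoly E p \<Longrightarrow> p \<noteq> 0 \<Longrightarrow> poly p \<gamma> = 0 \<Longrightarrow> degree \<mu> \<le> degree p"
  using mu by (auto simp: is_minpoly_def)

lemma mu_dvd: assumes "Epoly E p" "poly p \<gamma> = 0" shows "\<exists>s. Epoly E s \<and> p = s * \<mu>"
proof -
  obtain s r where sr: "Epoly E s" "Epoly E r" "p = s * \<mu> + r" "r = 0 \<or> degree r < degree \<mu>"
    using Ediv[OF E mu_Epoly mu_nz assms(1)] by blast
  have "poly r \<gamma> = 0" using sr(3) assms(2) mu_root by simp
  then have "r = 0" using sr(2,4) mu_min[of r] by fastforce
  then show ?thesis using sr by auto
qed

lemma mu_deg: "degree \<mu> \<ge> 1"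
proof (rule ccontr)
  assume "\<not> degree \<mu> \<ge> 1"
  then have "degree \<mu> = 0" by simp
  then obtain c where "\<mu> = [:c:]" by (metis degree_eq_zeroE)
  then show False using mu_nz mu_root by simp
qed

lemma mu_reduce: assumes "Epoly E p"
  shows "\<exists>r. Epoly E r \<and> poly r \<gamma> = poly p \<gamma> \<and> degree r < degree \<mu>"
proof -
  obtain s r where sr: "Epoly E s" "Epoly E r" "p = s * \<mu> + r" "r = 0 \<or> degree r < degree \<mu>"
    using Ediv[OF E mu_Epoly mu_nz assms(1)] by blast
  have "degree r < degree \<mu>" using sr(4) mu_deg by auto
  then show ?thesis using sr mu_root by (intro exI[of _ r]) auto
qed

lemma adj_inverse_aux:
  "Epoly E p \<Longrightarrow> poly p \<gamma> \<noteq> 0 \<Longrightarrow> degree p < degree \<mu> \<Longrightarrow> \<exists>q. Epoly E q \<and> poly q \<gamma> * poly p \<gamma> = 1"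
proof (induction "degree p" arbitrary: p rule: less_induct)
  case less
  show ?case
  proof (cases "degree p = 0")
    case True
    then obtain c where c: "p = [:c:]" by (metis degree_eq_zeroE)
    have "coeff p 0 \<in> E" using less.prems(1) by (simp add: Epoly_def)
    then have "c \<in> E" "c \<noteq> 0" using less.prems(2) c by auto
    then show ?thesis using c Epoly_const[OF E sf_inverse[OF E, of c]]
      by (intro exI[of _ "[:inverse c:]"]) auto
  next
    case False
    have p0: "p \<noteq> 0" using less.prems by auto
    obtain s r where sr: "Epoly E s" "Epoly E r" "\<mu> = s * p + r" "r = 0 \<or> degree r < degree p"
      using Ediv[OF E less.prems(1) p0 mu_Epoly] by blast
    have rs: "poly r \<gamma> = - poly s \<gamma> * poly p \<gamma>"
      using sr(3) mu_root by (simp add: eq_neg_iff_add_eq_0 algebra_simps)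
    show ?thesis
    proof (cases "poly r \<gamma> = 0")
      case True
      then have s\<gamma>: "poly s \<gamma> = 0" using rs less.prems(2) by simp
      have s0: "s \<noteq> 0"
      proof
        assume "s = 0"
        then have "\<mu> = r" using sr by simp
        then show False using sr(4) mu_nz less.prems(3) by auto
      qed
      have "degree (s * p) = degree s + degree p" using s0 p0 by (simp add: degree_mult_eq)
      moreover have "s * p = \<mu> - r" using sr(3) by simp
      moreover have "degree (\<mu> - r) \<le> degree \<mu>"
        using sr(4) less.prems(3) degree_diff_le[of \<mu> "degree \<mu>" r] by auto
      ultimately have "degree s < degree \<mu>" using False by simp
      then show ?thesis using mu_min[OF sr(1) s0 s\<gamma>] by simp
    next
      case False
      have dr: "degree r < degree p" using sr(4) False by auto
      obtain q where q: "Epoly E q" "poly q \<gamma> * poly r \<gamma> = 1"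
        using less.hyps[OF dr sr(2) False] dr less.prems(3) by auto
      have "poly (- q * s) \<gamma> * poly p \<gamma> = 1" using q(2) rs by (simp add: algebra_simps)
      then show ?thesis using Epoly_mult[OF E Epoly_uminus[OF E q(1)] sr(1)] by blast
    qed
  qed
qed

lemma adj_subf: "subf (adj E \<gamma>)"
  unfolding complex_subfield_def
proof (intro conjI ballI impI)
  show "0 \<in> adj E \<gamma>" unfolding adj_def using Epoly_0[OF E] by force
  show "1 \<in> adj E \<gamma>" unfolding adj_def using Epoly_const[OF E sf_1[OF E]]
    by (intro CollectI exI[of _ "[:1:]"]) auto
  fix x y assume x: "x \<in> adj E \<gamma>" and y: "y \<in> adj E \<gamma>"
  then obtain p q where pq: "Epoly E p" "Epoly E q" "x = poly p \<gamma>" "y = poly q \<gamma>"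
    unfolding adj_def by blast
  show "x + y \<in> adj E \<gamma>" unfolding adj_def using pq Epoly_add[OF E pq(1,2)]
    by (intro CollectI exI[of _ "p + q"]) auto
  show "x - y \<in> adj E \<gamma>" unfolding adj_def using pq Epoly_diff[OF E pq(1,2)]
    by (intro CollectI exI[of _ "p - q"]) auto
  show "x * y \<in> adj E \<gamma>" unfolding adj_def using pq Epoly_mult[OF E pq(1,2)]
    by (intro CollectI exI[of _ "p * q"]) auto
next
  fix x assume x: "x \<in> adj E \<gamma>" and x0: "x \<noteq> 0"
  then obtain p where p: "Epoly E p" "x = poly p \<gamma>" unfolding adj_def by blast
  obtain r where r: "Epoly E r" "poly r \<gamma> = poly p \<gamma>" "degree r < degree \<mu>"
    using mu_reduce[OF p(1)] by blast
  obtain q where q: "Epoly E q" "poly q \<gamma> * poly r \<gamma> = 1"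
    using adj_inverse_aux[OF r(1) _ r(3)] r(2) p(2) x0 by auto
  have "inverse x = poly q \<gamma>" using q(2) r(2) p(2) by (metis inverse_unique mult.commute)
  then show "inverse x \<in> adj E \<gamma>" unfolding adj_def using q(1) by blast
qed

end

lemma adj_base: "subf E \<Longrightarrow> x \<in> E \<Longrightarrow> x \<in> adj E \<gamma>"
  unfolding adj_def by (intro CollectI exI[of _ "[:x:]"]) (simp add: Epoly_const)
lemma adj_gen: "subf E \<Longrightarrow> \<gamma> \<in> adj E \<gamma>"
  unfolding adj_def by (intro CollectI exI[of _ "[:0, 1:]"]) (simp add: Epoly_X)
lemma adj_sub: assumes "subf F" "E \<subseteq> F" "\<gamma> \<in> F" shows "adj E \<gamma> \<subseteq> F"
proof
  fix x assume "x \<in> adj E \<gamma>"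
  then obtain p where "Epoly E p" "x = poly p \<gamma>" unfolding adj_def by blast
  then show "x \<in> F" using sf_poly[OF assms(1) Epoly_mono[OF _ assms(2)] assms(3)] by blast
qed

section \<open>Extension of a homomorphism to a simple extension\<close>

lemma ext_step:
  assumes E: "subf E" and h: "fhom E \<psi>" and mu: "is_minpoly E \<gamma> \<mu>"
    and r: "poly (map_poly \<psi> \<mu>) \<gamma>' = 0"
  shows "\<exists>\<Psi>. fhom (adj E \<gamma>) \<Psi> \<and> (\<forall>x\<in>E. \<Psi> x = \<psi> x) \<and> \<Psi> \<gamma> = \<gamma>'"
proof -
  have W: "poly (map_poly \<psi> p) \<gamma>' = poly (map_poly \<psi> q) \<gamma>'"
    if P: "Epoly E p" "Epoly E q" "poly p \<gamma> = poly q \<gamma>" for p q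
  proof -
    have "poly (p - q) \<gamma> = 0" using P by simp
    then obtain s where s: "Epoly E s" "p - q = s * \<mu>"
      using mu_dvd[OF E mu Epoly_diff[OF E P(1,2)]] by blast
    have "map_poly \<psi> p - map_poly \<psi> q = map_poly \<psi> s * map_poly \<psi> \<mu>"
      using mpE_diff[OF E h P(1,2)] mpE_mult[OF E h s(1) mu_Epoly[OF E mu]] s(2) by simp
    then have "poly (map_poly \<psi> p - map_poly \<psi> q) \<gamma>' = 0" using r by simp
    then show ?thesis by simp
  qed
  define rep where "rep x = (SOME p. Epoly E p \<and> x = poly p \<gamma>)" for x
  define \<Psi> where "\<Psi> x = poly (map_poly \<psi> (rep x)) \<gamma>'" for x
  have ev: "\<Psi> (poly p \<gamma>) = poly (map_poly \<psi> p) \<gamma>'" if "Epoly E p" for p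
  proof -
    have "Epoly E (rep (poly p \<gamma>)) \<and> poly p \<gamma> = poly (rep (poly p \<gamma>)) \<gamma>"
      unfolding rep_def by (rule someI[of _ p]) (use that in auto)
    then show ?thesis unfolding \<Psi>_def using W[OF that] by (metis (no_types, lifting))
  qed
  have "fhom (adj E \<gamma>) \<Psi>"
    unfolding fhom_def
  proof (intro conjI ballI)
    show "\<Psi> 1 = 1" using ev[OF Epoly_const[OF E sf_1[OF E]]] fh_1[OF E h]
      by (simp add: mpE_const[OF E h])
    fix x y assume x: "x \<in> adj E \<gamma>" and y: "y \<in> adj E \<gamma>"
    then obtain p q where pq: "Epoly E p" "Epoly E q" "x = poly p \<gamma>" "y = poly q \<gamma>"
      unfolding adj_def by blast
    show "\<Psi> (x + y) = \<Psi> x + \<Psi> y"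
      using ev[OF Epoly_add[OF E pq(1,2)]] ev[OF pq(1)] ev[OF pq(2)] pq(3,4)
      by (simp add: mpE_add[OF E h pq(1,2)])
    show "\<Psi> (x * y) = \<Psi> x * \<Psi> y"
      using ev[OF Epoly_mult[OF E pq(1,2)]] ev[OF pq(1)] ev[OF pq(2)] pq(3,4)
      by (simp add: mpE_mult[OF E h pq(1,2)])
  qed
  moreover have "\<Psi> x = \<psi> x" if "x \<in> E" for x
    using ev[OF Epoly_const[OF E that]] by (simp add: mpE_const[OF E h])
  moreover have "\<Psi> \<gamma> = \<gamma>'"
    using ev[OF Epoly_X[OF E]] by (simp add: map_poly_pCons fh_0[OF E h] fh_1[OF E h] mpE_const[OF E h])
  ultimately show ?thesis by blast
qed


section \<open>The splitting field\<close>

lemma subf_Inter: assumes "\<And>F. F \<in> S \<Longrightarrow> subf F" shows "subf (\<Inter> S)"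
  unfolding complex_subfield_def
  using sf_0[OF assms] sf_1[OF assms] sf_add[OF assms] sf_diff[OF assms] sf_mult[OF assms] sf_inverse[OF assms]
  by auto

lemma root_exists: "degree (p :: complex poly) \<ge> 1 \<Longrightarrow> \<exists>z. poly p z = 0"
  by (rule fundamental_theorem_of_algebra) (simp add: constant_degree)

context
  fixes f :: "int poly"
  assumes f0: "f \<noteq> 0"
begin

abbreviation "fc \<equiv> (map_poly of_int f :: complex poly)"
abbreviation "RR \<equiv> int_poly_roots f"
abbreviation "KK \<equiv> splitting_field f"

lemma fc_nz: "fc \<noteq> 0"
  using f0 by (metis map_poly_eq_0_iff of_int_0 of_int_eq_0_iff)

lemma RR_finite: "finite RR"
  unfolding int_poly_roots_def using poly_roots_finite[OF fc_nz] .

lemma K_subf: "subf KK"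
  unfolding splitting_field_def by (rule subf_Inter) auto

lemma R_sub_K: "RR \<subseteq> KK"
  unfolding splitting_field_def by auto

lemma K_min: "subf F \<Longrightarrow> RR \<subseteq> F \<Longrightarrow> KK \<subseteq> F"
  unfolding splitting_field_def by auto

lemma ext_K:
  "subf E \<Longrightarrow> E \<subseteq> KK \<Longrightarrow> fhom E \<psi> \<Longrightarrow> \<exists>\<Phi>. fhom KK \<Phi> \<and> (\<forall>x\<in>E. \<Phi> x = \<psi> x)"
proof (induction "card (RR - E)" arbitrary: E \<psi> rule: less_induct)
  case less
  note E = less.prems(1) and EK = less.prems(2) and h = less.prems(3)
  show ?case
  proof (cases "RR \<subseteq> E")
    case True
    then have "E = KK" using K_min[OF E] EK by auto
    then show ?thesis using h by blast
  next
    case False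
    then obtain \<gamma> where g: "\<gamma> \<in> RR" "\<gamma> \<notin> E" by blast
    have fcE: "Epoly E fc" by (rule Epoly_of_int[OF E])
    have fg: "poly fc \<gamma> = 0" using g(1) by (simp add: int_poly_roots_def)
    obtain \<mu> where mu: "is_minpoly E \<gamma> \<mu>" using minpoly_exists[OF fcE fc_nz fg] by blast
    have "degree (map_poly \<psi> \<mu>) \<ge> 1"
      using mpE_degree[OF E h mu_Epoly[OF E mu]] mu_deg[OF E mu] by simp
    then obtain \<gamma>' where "poly (map_poly \<psi> \<mu>) \<gamma>' = 0" using root_exists by blast
    then obtain \<Psi> where \<Psi>: "fhom (adj E \<gamma>) \<Psi>" "\<forall>x\<in>E. \<Psi> x = \<psi> x"
      using ext_step[OF E h mu] by blast
    have A: "subf (adj E \<gamma>)" by (rule adj_subf[OF E mu])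
    have AK: "adj E \<gamma> \<subseteq> KK" by (rule adj_sub[OF K_subf EK]) (use g R_sub_K in auto)
    have "RR - adj E \<gamma> \<subset> RR - E"
      using adj_gen[OF E, of \<gamma>] adj_base[OF E] g by auto
    then have "card (RR - adj E \<gamma>) < card (RR - E)"
      by (rule psubset_card_mono[rotated]) (use RR_finite in auto)
    from less.hyps[OF this A AK \<Psi>(1)] obtain \<Phi> where
      "fhom KK \<Phi>" "\<forall>x\<in>adj E \<gamma>. \<Phi> x = \<Psi> x" by blast
    then show ?thesis using \<Psi>(2) adj_base[OF E] by auto
  qed
qed

lemma fhom_K_aut:
  assumes h: "fhom KK \<Phi>"
  shows "restrict \<Phi> KK \<in> field_auts KK"
proof -
  note K = K_subf
  have fcK: "Epoly KK fc" by (rule Epoly_of_int[OF K])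
  have RR: "\<Phi> z \<in> RR" if "z \<in> RR" for z
  proof -
    have zK: "z \<in> KK" using that R_sub_K by auto
    have "\<Phi> (poly fc z) = poly fc (\<Phi> z)"
      using mpE_poly[OF K h fcK zK] mpE_of_int[OF K h] by simp
    then show ?thesis using that fh_0[OF K h] by (simp add: int_poly_roots_def)
  qed
  have inj: "inj_on \<Phi> KK" by (rule fh_inj[OF K h])
  have imR: "\<Phi> ` RR = RR"
  proof (rule endo_inj_surj[OF RR_finite])
    show "\<Phi> ` RR \<subseteq> RR" using RR by blast
    show "inj_on \<Phi> RR" by (rule inj_on_subset[OF inj R_sub_K])
  qed
  define S where "S = {x \<in> KK. \<Phi> x \<in> KK}"
  have "subf S" unfolding complex_subfield_def S_def
  proof (intro conjI ballI impI)
    show "0 \<in> {x \<in> KK. \<Phi> x \<in> KK}" using fh_0[OF K h] sf_0[OF K] by simp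
    show "1 \<in> {x \<in> KK. \<Phi> x \<in> KK}" using fh_1[OF K h] sf_1[OF K] by simp
    fix x y assume x: "x \<in> {x \<in> KK. \<Phi> x \<in> KK}" and y: "y \<in> {x \<in> KK. \<Phi> x \<in> KK}"
    then have xy: "x \<in> KK" "y \<in> KK" "\<Phi> x \<in> KK" "\<Phi> y \<in> KK" by auto
    show "x + y \<in> {x \<in> KK. \<Phi> x \<in> KK}"
      using fh_add[OF K h xy(1,2)] sf_add[OF K xy(1,2)] sf_add[OF K xy(3,4)] by simp
    show "x - y \<in> {x \<in> KK. \<Phi> x \<in> KK}"
      using fh_diff[OF K h xy(1,2)] sf_diff[OF K xy(1,2)] sf_diff[OF K xy(3,4)] by simp
    show "x * y \<in> {x \<in> KK. \<Phi> x \<in> KK}"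
      using fh_mult[OF K h xy(1,2)] sf_mult[OF K xy(1,2)] sf_mult[OF K xy(3,4)] by simp
  next
    fix x assume x: "x \<in> {x \<in> KK. \<Phi> x \<in> KK}"
    then have xy: "x \<in> KK" "\<Phi> x \<in> KK" by auto
    show "inverse x \<in> {x \<in> KK. \<Phi> x \<in> KK}"
      using fh_inverse[OF K h xy(1)] sf_inverse[OF K xy(1)] sf_inverse[OF K xy(2)] by simp
  qed
  moreover have "RR \<subseteq> S" unfolding S_def using RR R_sub_K by auto
  ultimately have "KK \<subseteq> S" by (rule K_min)
  then have into: "\<Phi> ` KK \<subseteq> KK" unfolding S_def by auto
  have "subf (\<Phi> ` KK)" unfolding complex_subfield_def
  proof (intro conjI ballI impI)
    show "0 \<in> \<Phi> ` KK" using fh_0[OF K h] sf_0[OF K] by (simp add: rev_image_eqI)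
    show "1 \<in> \<Phi> ` KK" using fh_1[OF K h] sf_1[OF K] by (simp add: rev_image_eqI)
    fix u v assume "u \<in> \<Phi> ` KK" "v \<in> \<Phi> ` KK"
    then obtain x y where xy: "x \<in> KK" "y \<in> KK" "u = \<Phi> x" "v = \<Phi> y" by blast
    show "u + v \<in> \<Phi> ` KK" using xy fh_add[OF K h xy(1,2)] sf_add[OF K xy(1,2)] by (simp add: rev_image_eqI)
    show "u - v \<in> \<Phi> ` KK" using xy fh_diff[OF K h xy(1,2)] sf_diff[OF K xy(1,2)] by (simp add: rev_image_eqI)
    show "u * v \<in> \<Phi> ` KK" using xy fh_mult[OF K h xy(1,2)] sf_mult[OF K xy(1,2)] by (simp add: rev_image_eqI)
  next
    fix u assume "u \<in> \<Phi> ` KK"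
    then obtain x where x: "x \<in> KK" "u = \<Phi> x" by blast
    show "inverse u \<in> \<Phi> ` KK" using x fh_inverse[OF K h x(1)] sf_inverse[OF K x(1)] by (simp add: rev_image_eqI)
  qed
  moreover have "RR \<subseteq> \<Phi> ` KK" using imR R_sub_K by auto
  ultimately have "KK \<subseteq> \<Phi> ` KK" by (rule K_min)
  with into have im: "\<Phi> ` KK = KK" by auto
  have bij: "bij_betw \<Phi> KK KK" using inj im by (simp add: bij_betw_def)
  have b2: "bij_betw (restrict \<Phi> KK) KK KK = bij_betw \<Phi> KK KK" by (rule bij_betw_cong) simp
  show ?thesis unfolding field_auts_def
  proof (intro CollectI conjI ballI)
    show "restrict \<Phi> KK \<in> extensional KK" by (rule restrict_extensional)
    show "bij_betw (restrict \<Phi> KK) KK KK" using bij b2 by simp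
    show "restrict \<Phi> KK 1 = 1" using fh_1[OF K h] sf_1[OF K] by simp
    fix x y assume xy: "x \<in> KK" "y \<in> KK"
    show "restrict \<Phi> KK (x + y) = restrict \<Phi> KK x + restrict \<Phi> KK y"
      using fh_add[OF K h xy] sf_add[OF K xy] xy by simp
    show "restrict \<Phi> KK (x * y) = restrict \<Phi> KK x * restrict \<Phi> KK y"
      using fh_mult[OF K h xy] sf_mult[OF K xy] xy by simp
  qed
qed

end


lemma mp_of_rat_add: "map_poly (of_rat :: rat \<Rightarrow> complex) (p + q) = map_poly of_rat p + map_poly of_rat q"
  by (rule mp_add_gen) (auto simp: of_rat_add)
lemma mp_of_rat_mult: "map_poly (of_rat :: rat \<Rightarrow> complex) (p * q) = map_poly of_rat p * map_poly of_rat q"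
  by (rule mp_mult_gen) (auto simp: of_rat_add of_rat_mult)

lemma inv_of_rat_0: "inv_into UNIV (of_rat :: rat \<Rightarrow> complex) 0 = 0"
proof -
  have "inj (of_rat :: rat \<Rightarrow> complex)" by (rule injI) simp
  then show ?thesis by (metis inv_f_f of_rat_0)
qed

lemma Epoly_Rats_conv:
  assumes "Epoly \<rat> p"
  shows "p = map_poly (of_rat :: rat \<Rightarrow> complex) (map_poly (inv_into UNIV of_rat) p)"
proof (rule poly_eqI)
  fix n
  have "coeff p n \<in> \<rat>" using assms by (simp add: Epoly_def)
  then have "coeff p n \<in> range of_rat" by (simp add: Rats_def)
  then show "coeff p n = coeff (map_poly of_rat (map_poly (inv_into UNIV of_rat) p)) n"
    by (simp add: coeff_map_poly inv_of_rat_0 f_inv_into_f)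
qed

lemma Epoly_of_rat: "Epoly \<rat> (map_poly (of_rat :: rat \<Rightarrow> complex) p)"
  by (simp add: Epoly_def coeff_map_poly)

lemma irr_min:
  fixes F p :: "rat poly" and a :: complex
  assumes irr: "irreducible F" and p0: "p \<noteq> 0"
    and rF: "poly (map_poly of_rat F) a = 0" and rp: "poly (map_poly of_rat p) a = 0"
  shows "degree F \<le> degree p"
proof -
  define d where "d = gcd F p"
  have bz: "fst (bezout_coefficients F p) * F + snd (bezout_coefficients F p) * p = d"
    unfolding d_def by (rule bezout_coefficients_fst_snd)
  have rd: "poly (map_poly (of_rat :: rat \<Rightarrow> complex) d) a = 0"
    unfolding bz[symmetric] by (simp add: mp_of_rat_add mp_of_rat_mult rF rp)
  have d0: "d \<noteq> 0" using p0 by (simp add: d_def)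
  have F0: "F \<noteq> 0" using irr by auto
  have "d dvd F" by (simp add: d_def)
  then obtain e where e: "F = d * e" by (elim dvdE)
  from irreducibleD[OF irr e] have "F dvd d"
  proof
    assume "d dvd 1"
    then have "degree d = 0" using d0 is_unit_iff_degree by blast
    then obtain c where c: "d = [:c:]" by (metis degree_eq_zeroE)
    then have "c \<noteq> 0" using d0 by simp
    then have "poly (map_poly (of_rat :: rat \<Rightarrow> complex) d) a \<noteq> 0" using c by (simp add: map_poly_pCons)
    then show "F dvd d" using rd by simp
  next
    assume "e dvd 1"
    then show "F dvd d" using e by (simp add: mult_unit_dvd_iff)
  qed
  moreover have "d dvd p" by (simp add: d_def)
  ultimately have "F dvd p" by (rule dvd_trans)
  then show ?thesis using F0 p0 by (rule dvd_imp_degree)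
qed


lemma L0: "(M::int) > 0 \<Longrightarrow> (a + a) mod M = a \<Longrightarrow> 0 \<le> a \<Longrightarrow> a < M \<Longrightarrow> a = 0"
  by (metis add_diff_cancel_left' mod_eq_dvd_iff mod_pos_pos_trivial zdvd_not_zless order_less_le)

lemma L1: "odd (m::nat) \<Longrightarrow> (a + a) mod int m = 0 \<Longrightarrow> 0 \<le> a \<Longrightarrow> a < int m \<Longrightarrow> a = 0"
proof -
  assume o: "odd m" and h: "(a + a) mod int m = 0" and a: "0 \<le> a" "a < int m"
  have "int m dvd a + a" using h by (simp only: mod_eq_0_iff_dvd)
  then have d: "int m dvd 2 * a" by (simp only: mult_2)
  have "odd (int m)" using o by simp
  then have "coprime 2 (int m)" by (rule iffD2[OF coprime_left_2_iff_odd])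
  then have "coprime (int m) 2" by (simp only: coprime_commute)
  then have "int m dvd a" using d coprime_dvd_mult_right_iff by blast
  then have "a mod int m = 0" by (simp only: dvd_eq_mod_eq_0)
  moreover have "a mod int m = a" using a by (rule mod_pos_pos_trivial)
  ultimately show "a = 0" by simp
qed

lemma L2: "(m::nat) \<ge> 3 \<Longrightarrow> (-2) mod int m \<noteq> 0"
proof
  assume m: "m \<ge> 3" and h: "(-2) mod int m = 0"
  have "int m dvd -2" using h by (simp only: mod_eq_0_iff_dvd)
  then have "int m dvd 2" by (simp only: dvd_minus_iff)
  then have "int m \<le> 2" by (rule zdvd_imp_le) simp
  with m show False by simp
qed

lemma L3: "(M::int) > 0 \<Longrightarrow> b = (a + 1) mod M \<Longrightarrow> (a + -((b + - ((a + - b) mod M)) mod M)) mod M = (-2) mod M"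
  by (simp add: mod_simps)

lemma L4: "(M::int) > 0 \<Longrightarrow> (c + (int k * c) mod M) mod M = (int (Suc k) * c) mod M"
  by (simp add: mod_simps algebra_simps)

lemma dmul: "monoid.mult (dihedral_group m) (a, x) (b, y) = ((a + (if x then - b else b)) mod int m, x \<noteq> y)"
  by (simp add: dihedral_group_def)

lemma dcar: "carrier (dihedral_group m) = {0..<int m} \<times> UNIV"
  by (simp add: dihedral_group_def)

fun cpow :: "complex set \<Rightarrow> (complex \<Rightarrow> complex) \<Rightarrow> nat \<Rightarrow> (complex \<Rightarrow> complex)" where
  "cpow K r 0 = restrict id K"
| "cpow K r (Suc k) = compose K r (cpow K r k)"

lemma cpow_apply: "x \<in> K \<Longrightarrow> cpow K r k x = (r ^^ k) x"
  by (induction k) (simp_all add: compose_eq)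

section \<open>A 2-adic lemma\<close>

lemma two_adic:
  fixes Zs :: "complex set" and r :: "complex \<Rightarrow> complex" and m :: nat
  assumes add: "\<And>x y. x \<in> Zs \<Longrightarrow> y \<in> Zs \<Longrightarrow> x + y \<in> Zs"
    and sc: "\<And>k x. x \<in> Zs \<Longrightarrow> of_int k * x \<in> Zs"
    and rZ: "\<And>x. x \<in> Zs \<Longrightarrow> r x \<in> Zs"
    and radd: "\<And>x y. x \<in> Zs \<Longrightarrow> y \<in> Zs \<Longrightarrow> r (x + y) = r x + r y"
    and rsc: "\<And>k x. x \<in> Zs \<Longrightarrow> r (of_int k * x) = of_int k * r x"
    and rpow: "\<And>x. x \<in> Zs \<Longrightarrow> (r ^^ m) x = x"
    and modd: "odd m"
    and base: "\<And>x. x \<in> Zs \<Longrightarrow> \<exists>y\<in>Zs. r x - x = 2 * y"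
  shows "\<forall>x\<in>Zs. \<exists>y\<in>Zs. r x - x = 2 ^ Suc j * y"
proof (induction j)
  case 0 then show ?case using base by simp
next
  case (Suc j)
  define J where "J = Suc j"
  have H: "\<forall>x\<in>Zs. \<exists>y\<in>Zs. r x - x = 2 ^ J * y" using Suc J_def by simp
  define E where "E x = (SOME y. y \<in> Zs \<and> r x - x = 2 ^ J * y)" for x
  have E: "E x \<in> Zs \<and> r x - x = 2 ^ J * E x" if "x \<in> Zs" for x
    unfolding E_def by (rule someI_ex) (use H that in blast)
  have rE: "r x = x + 2 ^ J * E x" if "x \<in> Zs" for x using E[OF that] by (simp add: algebra_simps)
  have Z0: "0 \<in> Zs" if "x \<in> Zs" for x using sc[OF that, of 0] by simp
  have Zi: "of_int k * x \<in> Zs" if "x \<in> Zs" for k x using sc[OF that] .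
  have pJ: "(2::complex) ^ J = of_int (2 ^ J)" by simp
  have pJ1: "(2::complex) ^ (J + 1) = of_int (2 ^ (J + 1))" by simp
  have C: "\<exists>w\<in>Zs. (r ^^ k) x = x + of_int (int k * 2 ^ J) * E x + 2 ^ (J + 1) * w" if x: "x \<in> Zs" for k x
  proof (induction k)
    case 0 show ?case using Z0[OF x] by (intro bexI[of _ 0]) simp_all
  next
    case (Suc k)
    then obtain w where w: "w \<in> Zs" "(r ^^ k) x = x + of_int (int k * 2 ^ J) * E x + 2 ^ (J + 1) * w"
      by blast
    have Ex: "E x \<in> Zs" using E[OF x] by simp
    have EEx: "E (E x) \<in> Zs" using E[OF Ex] by simp
    have t1: "of_int (int k * 2 ^ J) * E x \<in> Zs" by (rule Zi[OF Ex])
    have t2: "2 ^ (J + 1) * w \<in> Zs" using Zi[OF w(1), of "2 ^ (J + 1)"] by simp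
    have "(r ^^ Suc k) x = r (x + of_int (int k * 2 ^ J) * E x + 2 ^ (J + 1) * w)" using w(2) by simp
    also have "\<dots> = r x + r (of_int (int k * 2 ^ J) * E x) + r (2 ^ (J + 1) * w)"
      using radd[OF add[OF x t1] t2] radd[OF x t1] by simp
    also have "r (2 ^ (J + 1) * w) = 2 ^ (J + 1) * r w" using rsc[OF w(1), of "2 ^ (J + 1)"] by simp
    also have "r (of_int (int k * 2 ^ J) * E x) = of_int (int k * 2 ^ J) * r (E x)" by (rule rsc[OF Ex])
    also have "r (E x) = E x + 2 ^ J * E (E x)" by (rule rE[OF Ex])
    also have "r x = x + 2 ^ J * E x" by (rule rE[OF x])
    finally have eq: "(r ^^ Suc k) x = x + 2 ^ J * E x + of_int (int k * 2 ^ J) * (E x + 2 ^ J * E (E x)) + 2 ^ (J + 1) * r w" .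
    define w' where "w' = of_int (int k * 2 ^ (J - 1)) * E (E x) + r w"
    have w'Z: "w' \<in> Zs" unfolding w'_def by (rule add[OF Zi[OF EEx] rZ[OF w(1)]])
    have J1: "J = Suc (J - 1)" using J_def by simp
    have "(r ^^ Suc k) x = x + of_int (int (Suc k) * 2 ^ J) * E x + 2 ^ (J + 1) * w'"
      unfolding eq w'_def
      by (subst (1 2 3 4 5) J1) (simp add: algebra_simps power_add)
    then show ?case using w'Z by blast
  qed
  show ?case unfolding J_def[symmetric]
  proof
    fix x assume x: "x \<in> Zs"
    obtain w where w: "w \<in> Zs" "(r ^^ m) x = x + of_int (int m * 2 ^ J) * E x + 2 ^ (J + 1) * w"
      using C[OF x, of m] by blast
    then have "of_int (int m * 2 ^ J) * E x + 2 ^ (J + 1) * w = 0" using rpow[OF x] by simp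
    then have "2 ^ J * (of_nat m * E x + 2 * w) = 0" by (simp add: algebra_simps power_add)
    then have "of_nat m * E x + 2 * w = 0" by simp
    then have me: "of_nat m * E x = - (2 * w)" by (simp only: eq_neg_iff_add_eq_0)
    obtain l where l: "m = 2 * l + 1" using modd oddE by blast
    define y where "y = of_int (-1) * w + of_int (- int l) * E x"
    have yZ: "y \<in> Zs" unfolding y_def using E[OF x] by (intro add Zi w(1)) simp
    have "E x = of_nat m * E x - 2 * of_nat l * E x" using l by (simp add: algebra_simps)
    also have "\<dots> = - (2 * w) - 2 * of_nat l * E x" using me by simp
    also have "\<dots> = 2 * y" unfolding y_def by (simp add: algebra_simps)
    finally have "E x = 2 * y" .
    then have "r x - x = 2 ^ Suc J * y" using E[OF x] by simp
    then show "\<exists>y\<in>Zs. r x - x = 2 ^ Suc J * y" using yZ by blast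
  qed
qed

lemma NEGP: "\<exists>q. poly (map_poly (of_int :: int \<Rightarrow> complex) p) (- a) - poly (map_poly of_int p) a
   = 2 * poly (map_poly of_int q) a"
proof (induction p)
  case 0 then show ?case by (intro exI[of _ 0]) simp
next
  case (pCons c p)
  then obtain q where q: "poly (map_poly (of_int :: int \<Rightarrow> complex) p) (- a) - poly (map_poly of_int p) a
     = 2 * poly (map_poly of_int q) a" by blast
  have mneg: "map_poly (of_int :: int \<Rightarrow> complex) (- p - q) = - map_poly of_int p - map_poly of_int q"
    by (intro poly_eqI) (simp add: coeff_map_poly)
  have "poly (map_poly (of_int :: int \<Rightarrow> complex) (pCons c p)) (- a) - poly (map_poly of_int (pCons c p)) a
      = - a * (poly (map_poly of_int p) (- a) + poly (map_poly of_int p) a)"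
    by (simp add: map_poly_pCons algebra_simps)
  also have "\<dots> = 2 * poly (map_poly of_int (pCons 0 (- p - q))) a"
    using q by (simp add: map_poly_pCons mneg algebra_simps)
  finally show ?case by blast
qed

lemma DEN: "Epoly \<rat> p \<Longrightarrow> \<exists>D::int. D > 0 \<and> (\<exists>q. smult (of_int D) p = map_poly of_int q)"
proof (induction p)
  case 0 then show ?case by (intro exI[of _ 1]) (auto intro: exI[of _ 0])
next
  case (pCons c p)
  then have c: "c \<in> \<rat>" and p: "Epoly \<rat> p" by (simp_all add: Epoly_pCons_iff)
  from pCons.IH[OF p] obtain D q where Dq: "D > 0" "smult (of_int D) p = map_poly of_int q" by blast
  from c obtain a b where ab: "b > 0" "c = of_int a / of_int b" by (elim Rats_cases')
  have "smult (of_int (b * D)) (pCons c p) = map_poly of_int (pCons (a * D) (smult b q))"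
  proof -
    have "smult (of_int (b * D)) (pCons c p) = pCons (of_int (b * D) * c) (smult (of_int b) (smult (of_int D) p))"
      by simp
    also have "of_int (b * D) * c = (of_int (a * D) :: complex)" using ab by (simp add: field_simps)
    also have "smult (of_int b) (smult (of_int D) p) = smult (of_int b) (map_poly of_int q)" using Dq by simp
    also have "pCons (of_int (a * D)) (smult (of_int b) (map_poly (of_int :: int \<Rightarrow> complex) q))
        = map_poly of_int (pCons (a * D) (smult b q))"
      by (simp add: map_poly_pCons map_poly_smult)
    finally show ?thesis .
  qed
  then show ?case using ab Dq by (intro exI[of _ "b * D"]) auto
qed

lemma fhom_id: "fhom E id"
  by (simp add: fhom_def)

lemma Rats_subf: "subf \<rat>"
  by (rule sf_Rats_subf)

context
  fixes m :: nat and g f :: "int poly" and \<alpha> :: complex and hI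
  assumes m3: "m \<ge> 3" and modd: "odd m" and g1: "lead_coeff g = 1" and dg: "degree g = m"
    and fdef: "f = pcompose g [:0, 0, 1:]"
    and irr: "irreducible (map_poly of_int f :: rat poly)"
    and root: "poly (map_poly of_int f) \<alpha> = (0::complex)"
    and mono: "int_adjoin \<alpha> = {x \<in> rat_adjoin \<alpha>. algebraic_int x}"
    and iso: "hI \<in> iso (gal_group f) (dihedral_group m)"
begin

abbreviation "Fc \<equiv> (map_poly of_int f :: complex poly)"
abbreviation "Rr \<equiv> int_poly_roots f"
abbreviation "Kk \<equiv> splitting_field f"
abbreviation "AA \<equiv> adj \<rat> \<alpha>"
abbreviation "Auts \<equiv> field_auts Kk"

lemma deg_f: "degree f = 2 * m"
  using dg by (simp add: fdef degree_pcompose)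

lemma f0: "f \<noteq> 0"
  using deg_f m3 by auto

lemma deg_fc: "degree Fc = 2 * m"
  using deg_f by (simp add: degree_map_poly)

lemma fc_rat: "map_poly (of_rat :: rat \<Rightarrow> complex) (map_poly of_int f) = Fc"
  by (simp add: map_poly_map_poly o_def)

lemma MIN:
  assumes "poly Fc a = 0" "Epoly \<rat> p" "p \<noteq> 0" "poly p a = 0"
  shows "2 * m \<le> degree p"
proof -
  define p' where "p' = map_poly (inv_into UNIV (of_rat :: rat \<Rightarrow> complex)) p"
  have pp: "p = map_poly of_rat p'" unfolding p'_def by (rule Epoly_Rats_conv[OF assms(2)])
  have "p' \<noteq> 0" using assms(3) pp by auto
  moreover have "poly (map_poly of_rat (map_poly of_int f :: rat poly)) a = 0"
    using assms(1) fc_rat by simp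
  moreover have "poly (map_poly of_rat p') a = 0" using assms(4) pp by simp
  ultimately have "degree (map_poly of_int f :: rat poly) \<le> degree p'"
    using irr_min[OF irr] by blast
  moreover have "degree p = degree p'" using pp by (simp add: degree_map_poly)
  ultimately show ?thesis using deg_f by (simp add: degree_map_poly)
qed

lemma SEP: "rsquarefree Fc"
  unfolding rsquarefree_roots
proof (intro allI notI)
  fix a assume a: "poly Fc a = 0 \<and> poly (pderiv Fc) a = 0"
  have E: "Epoly \<rat> (pderiv Fc)"
    unfolding Epoly_def coeff_pderiv by (simp add: coeff_map_poly)
  have "pderiv Fc \<noteq> 0" using deg_fc m3 by (simp add: pderiv_eq_0_iff)
  then have "2 * m \<le> degree (pderiv Fc)" using MIN[OF _ E] a by blast
  then show False using deg_fc m3 by (simp add: degree_pderiv)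
qed

lemma RR_eq: "Rr = {z. poly Fc z = 0}"
  by (simp add: int_poly_roots_def)

lemma CARD_RR: "card Rr = 2 * m"
proof -
  define P where "P = (\<Prod>z|poly Fc z = 0. [:-z, 1:])"
  have eq: "smult (lead_coeff Fc) P = Fc"
    unfolding P_def by (rule complex_poly_decompose_rsquarefree[OF SEP])
  have lc: "lead_coeff Fc \<noteq> 0" using fc_nz[OF f0] by simp
  have "degree Fc = degree (smult (lead_coeff Fc) P)" using eq by simp
  also have "\<dots> = degree P" using lc by (simp only: degree_smult_eq if_False)
  also have "\<dots> = (\<Sum>z|poly Fc z = 0. degree [:-z, 1:])"
    unfolding P_def by (rule degree_prod_sum_eq) simp
  also have "\<dots> = (\<Sum>z|poly Fc z = 0. (1::nat))"
    by (rule sum.cong) simp_all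
  also have "\<dots> = card {z. poly Fc z = 0}" by (simp only: card_eq_sum)
  finally show ?thesis using deg_fc RR_eq by simp
qed

lemma alpha_R: "\<alpha> \<in> Rr"
  using root by (simp add: int_poly_roots_def)

lemma poly_fc: "poly Fc z = poly (map_poly of_int g) (z ^ 2)"
  by (simp add: fdef poly_of_int_pcompose map_poly_pCons power2_eq_square)

lemma neg_R: "- \<alpha> \<in> Rr"
  using root by (simp add: int_poly_roots_def poly_fc)

lemma alpha_nz: "\<alpha> \<noteq> 0"
proof
  assume "\<alpha> = 0"
  then have "2 * m \<le> degree [:0, 1::complex:]"
    using MIN[OF root Epoly_X[OF Rats_subf]] by simp
  then show False using m3 by simp
qed

lemma A_eq: "rat_adjoin \<alpha> = AA"
proof
  show "rat_adjoin \<alpha> \<subseteq> AA"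
    unfolding rat_adjoin_def adj_def using Epoly_of_rat by blast
  show "AA \<subseteq> rat_adjoin \<alpha>"
  proof
    fix x assume "x \<in> AA"
    then obtain p where p: "Epoly \<rat> p" "x = poly p \<alpha>" unfolding adj_def by blast
    then have "x = poly (map_poly of_rat (map_poly (inv_into UNIV (of_rat :: rat \<Rightarrow> complex)) p)) \<alpha>"
      using Epoly_Rats_conv[OF p(1)] by simp
    then show "x \<in> rat_adjoin \<alpha>" unfolding rat_adjoin_def by blast
  qed
qed

lemma fcE: "subf E \<Longrightarrow> Epoly E Fc"
  by (rule Epoly_of_int)

lemma mu0_ex: "\<exists>\<mu>. is_minpoly \<rat> \<alpha> \<mu>"
  by (rule minpoly_exists[OF fcE[OF Rats_subf] fc_nz[OF f0] root])

lemma A_subf: "subf AA"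
  using mu0_ex adj_subf[OF Rats_subf] by blast

lemma K_subf': "subf Kk" by (rule K_subf[OF f0])

lemma alpha_K: "\<alpha> \<in> Kk" using alpha_R R_sub_K[OF f0] by auto

lemma A_K: "AA \<subseteq> Kk"
  by (rule adj_sub[OF K_subf']) (use alpha_K sf_Rats[OF K_subf'] in auto)

lemma AUT_EX:
  assumes d: "\<delta> \<in> Rr"
  shows "\<exists>\<sigma>\<in>Auts. \<sigma> \<alpha> = \<delta>"
proof -
  obtain \<mu> where mu: "is_minpoly \<rat> \<alpha> \<mu>" using mu0_ex by blast
  obtain s where s: "Epoly \<rat> s" "Fc = s * \<mu>"
    using mu_dvd[OF Rats_subf mu fcE[OF Rats_subf] root] by blast
  have "2 * m \<le> degree \<mu>"
    using MIN[OF root mu_Epoly[OF Rats_subf mu] mu_nz[OF Rats_subf mu] mu_root[OF Rats_subf mu]] .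
  moreover have s0: "s \<noteq> 0" using s(2) fc_nz[OF f0] by auto
  moreover have "degree Fc = degree s + degree \<mu>"
    using s(2) s0 mu_nz[OF Rats_subf mu] by (simp add: degree_mult_eq)
  ultimately have "degree s = 0" using deg_fc by simp
  then obtain c where c: "s = [:c:]" by (metis degree_eq_zeroE)
  have "c \<noteq> 0" using s0 c by simp
  moreover have "poly Fc \<delta> = 0" using d by (simp add: int_poly_roots_def)
  ultimately have "poly \<mu> \<delta> = 0" using s(2) c by simp
  then have "poly (map_poly id \<mu>) \<delta> = 0" by simp
  from ext_step[OF Rats_subf fhom_id mu this] obtain \<Psi> where
    \<Psi>: "fhom AA \<Psi>" "\<Psi> \<alpha> = \<delta>" by blast
  from ext_K[OF f0 A_subf A_K \<Psi>(1)] obtain \<Phi> where \<Phi>: "fhom Kk \<Phi>" "\<forall>x\<in>AA. \<Phi> x = \<Psi> x"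
    by blast
  have "restrict \<Phi> Kk \<in> Auts" by (rule fhom_K_aut[OF f0 \<Phi>(1)])
  moreover have "restrict \<Phi> Kk \<alpha> = \<delta>"
    using \<Phi>(2) \<Psi>(2) alpha_K adj_gen[OF Rats_subf, of \<alpha>] by simp
  ultimately show ?thesis by blast
qed

lemma ID_AUT: "restrict id Kk \<in> Auts"
  by (rule fhom_K_aut[OF f0 fhom_id])

lemma carrier_gal: "carrier (gal_group f) = Auts"
  by (simp add: gal_group_def)

lemma CARD_AUT: "card Auts = 2 * m" and FIN_AUT: "finite Auts"
proof -
  have b: "bij_betw hI Auts (carrier (dihedral_group m))"
    using iso carrier_gal by (simp add: iso_def)
  have "card (carrier (dihedral_group m)) = 2 * m"
    by (simp add: dihedral_group_def card_cartesian_product)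
  then show c: "card Auts = 2 * m" using bij_betw_same_card[OF b] by simp
  have "card Auts > 0" using c m3 by simp
  then show "finite Auts" by (rule card_ge_0_finite)
qed


lemma deg1_root:
  assumes E: "subf E" and p: "Epoly E p" "degree p = 1" "poly p \<gamma> = 0" shows "\<gamma> \<in> E"
proof -
  have "poly p \<gamma> = coeff p 0 + coeff p 1 * \<gamma>" using p(2) by (simp add: poly_altdef)
  moreover have c1: "coeff p 1 \<noteq> 0"
  proof -
    have "p \<noteq> 0" using p(2) by auto
    then have "coeff p (degree p) \<noteq> 0" by simp
    then show ?thesis using p(2) by simp
  qed
  ultimately have "\<gamma> = - coeff p 0 / coeff p 1" using p(3) by (simp add: field_simps add_eq_0_iff)
  moreover have "coeff p 0 \<in> E" "coeff p 1 \<in> E" using p(1) by (auto simp: Epoly_def)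
  ultimately show ?thesis using sf_divide[OF E sf_uminus[OF E]] by simp
qed

lemma R_sub_A: "Rr \<subseteq> AA"
proof (rule ccontr)
  assume "\<not> Rr \<subseteq> AA"
  then obtain \<gamma> where g: "\<gamma> \<in> Rr" "\<gamma> \<notin> AA" by blast
  have A: "subf AA" by (rule A_subf)
  have fg: "poly Fc \<gamma> = 0" using g(1) by (simp add: int_poly_roots_def)
  obtain \<mu> where mu: "is_minpoly AA \<gamma> \<mu>" using minpoly_exists[OF fcE[OF A] fc_nz[OF f0] fg] by blast
  have d2: "degree \<mu> \<ge> 2"
  proof (rule ccontr)
    assume "\<not> degree \<mu> \<ge> 2"
    then have "degree \<mu> = 1" using mu_deg[OF A mu] by simp
    then have "\<gamma> \<in> AA" using deg1_root[OF A mu_Epoly[OF A mu] _ mu_root[OF A mu]] by simp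
    with g show False by simp
  qed
  obtain s where s: "Epoly AA s" "Fc = s * \<mu>" using mu_dvd[OF A mu fcE[OF A] fg] by blast
  have "[:-\<gamma>, 1:] dvd \<mu>" using mu_root[OF A mu] by (simp add: poly_eq_0_iff_dvd)
  then obtain q where q: "\<mu> = [:-\<gamma>, 1:] * q" by (elim dvdE)
  have q0: "q \<noteq> 0" using q mu_nz[OF A mu] by auto
  have "degree \<mu> = degree [:-\<gamma>, 1:] + degree q"
    unfolding q by (rule degree_mult_eq) (use q0 in auto)
  then have "degree \<mu> = 1 + degree q" by simp
  then have "degree q \<ge> 1" using d2 by simp
  then obtain \<gamma>' where g': "poly q \<gamma>' = 0" using root_exists by blast
  have ne: "\<gamma>' \<noteq> \<gamma>"
  proof
    assume "\<gamma>' = \<gamma>"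
    then have "[:-\<gamma>, 1:] dvd q" using g' by (simp add: poly_eq_0_iff_dvd)
    then obtain q' where qq': "q = [:-\<gamma>, 1:] * q'" by (elim dvdE)
    have "Fc = s * ([:-\<gamma>, 1:] * ([:-\<gamma>, 1:] * q'))" by (simp only: s(2) q qq')
    also have "\<dots> = [:-\<gamma>, 1:] ^ 2 * (q' * s)" by (simp only: power2_eq_square ac_simps)
    finally have "Fc = [:-\<gamma>, 1:] ^ 2 * (q' * s)" .
    then have "[:-\<gamma>, 1:] ^ 2 dvd Fc" by (metis dvd_triv_left)
    then have "2 \<le> order \<gamma> Fc" using fc_nz[OF f0] by (simp add: order_divides)
    moreover have "order \<gamma> Fc = 0 \<or> order \<gamma> Fc = 1" using SEP by (simp add: rsquarefree_def)
    ultimately show False by auto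
  qed
  have "poly (map_poly id \<mu>) \<gamma>' = 0" using q g' by simp
  from ext_step[OF A fhom_id mu this] obtain \<Psi> where
    \<Psi>: "fhom (adj AA \<gamma>) \<Psi>" "\<forall>x\<in>AA. \<Psi> x = id x" "\<Psi> \<gamma> = \<gamma>'" by blast
  have B: "subf (adj AA \<gamma>)" by (rule adj_subf[OF A mu])
  have gK: "\<gamma> \<in> Kk" using g(1) R_sub_K[OF f0] by auto
  have BK: "adj AA \<gamma> \<subseteq> Kk" by (rule adj_sub[OF K_subf' A_K gK])
  from ext_K[OF f0 B BK \<Psi>(1)] obtain \<Phi> where \<Phi>: "fhom Kk \<Phi>" "\<forall>x\<in>adj AA \<gamma>. \<Phi> x = \<Psi> x"
    by blast
  define \<sigma>' where "\<sigma>' = restrict \<Phi> Kk"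
  have s'A: "\<sigma>' \<in> Auts" unfolding \<sigma>'_def by (rule fhom_K_aut[OF f0 \<Phi>(1)])
  have aA: "\<alpha> \<in> AA" by (rule adj_gen[OF Rats_subf])
  have s'a: "\<sigma>' \<alpha> = \<alpha>"
    using \<Phi>(2) \<Psi>(2) aA adj_base[OF A aA, of \<gamma>] alpha_K unfolding \<sigma>'_def by simp
  have s'g: "\<sigma>' \<gamma> = \<gamma>'"
    using \<Phi>(2) \<Psi>(3) adj_gen[OF A, of \<gamma>] gK unfolding \<sigma>'_def by simp
  define F where "F \<delta> = (if \<delta> = \<alpha> then restrict id Kk else (SOME \<sigma>. \<sigma> \<in> Auts \<and> \<sigma> \<alpha> = \<delta>))" for \<delta>
  have FA: "F \<delta> \<in> Auts \<and> F \<delta> \<alpha> = \<delta>" if "\<delta> \<in> Rr" for \<delta>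
  proof (cases "\<delta> = \<alpha>")
    case True then show ?thesis using ID_AUT alpha_K by (simp add: F_def)
  next
    case False
    have "\<exists>\<sigma>. \<sigma> \<in> Auts \<and> \<sigma> \<alpha> = \<delta>" using AUT_EX[OF that] by blast
    then have "(SOME \<sigma>. \<sigma> \<in> Auts \<and> \<sigma> \<alpha> = \<delta>) \<in> Auts \<and> (SOME \<sigma>. \<sigma> \<in> Auts \<and> \<sigma> \<alpha> = \<delta>) \<alpha> = \<delta>"
      by (rule someI_ex)
    then show ?thesis using False unfolding F_def by simp
  qed
  have inj: "inj_on F Rr"
  proof (rule inj_onI)
    fix x y assume "x \<in> Rr" "y \<in> Rr" "F x = F y"
    then show "x = y" using FA[of x] FA[of y] by metis
  qed
  have notin: "\<sigma>' \<notin> F ` Rr"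
  proof
    assume "\<sigma>' \<in> F ` Rr"
    then obtain \<delta> where d: "\<delta> \<in> Rr" "\<sigma>' = F \<delta>" by blast
    then have "\<delta> = \<alpha>" using FA[OF d(1)] s'a by simp
    then have "\<sigma>' = restrict id Kk" using d(2) by (simp add: F_def)
    then have "\<sigma>' \<gamma> = \<gamma>" using gK by simp
    then show False using s'g ne by simp
  qed
  have "insert \<sigma>' (F ` Rr) \<subseteq> Auts" using s'A FA by auto
  then have "card (insert \<sigma>' (F ` Rr)) \<le> card Auts" by (rule card_mono[OF FIN_AUT])
  moreover have "card (insert \<sigma>' (F ` Rr)) = card Rr + 1"
    using notin card_image[OF inj] RR_finite[OF f0] by simp
  ultimately show False using CARD_RR CARD_AUT by simp
qed

lemma K_EQ: "Kk = AA"
  using K_min[OF f0 A_subf R_sub_A] A_K by auto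

section \<open>Automorphisms\<close>

lemma AUT_fhom: "\<sigma> \<in> Auts \<Longrightarrow> fhom Kk \<sigma>"
  unfolding field_auts_def fhom_def by blast

lemma AUT_into: assumes s: "\<sigma> \<in> Auts" and x: "x \<in> Kk" shows "\<sigma> x \<in> Kk"
proof -
  have b: "bij_betw \<sigma> Kk Kk" using s by (simp only: field_auts_def mem_Collect_eq)
  show ?thesis by (rule bij_betw_apply[OF b x])
qed

lemma AUT_ext: "\<sigma> \<in> Auts \<Longrightarrow> \<sigma> \<in> extensional Kk"
  by (simp only: field_auts_def mem_Collect_eq)

lemma QK: "\<rat> \<subseteq> Kk" using sf_Rats[OF K_subf'] by blast

lemma AUT_Q: assumes s: "\<sigma> \<in> Auts" and p: "Epoly \<rat> p" and x: "x \<in> Kk"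
  shows "\<sigma> (poly p x) = poly p (\<sigma> x)"
proof -
  have h: "fhom Kk \<sigma>" by (rule AUT_fhom[OF s])
  have "map_poly \<sigma> p = p"
  proof (rule poly_eqI)
    fix n have "coeff p n \<in> \<rat>" using p by (simp add: Epoly_def)
    then show "coeff (map_poly \<sigma> p) n = coeff p n"
      by (simp add: coeff_map_poly fh_0[OF K_subf' h] fh_Rats[OF K_subf' h])
  qed
  then show ?thesis using mpE_poly[OF K_subf' h Epoly_mono[OF p QK] x] by simp
qed

lemma AUT_det: assumes s: "\<sigma> \<in> Auts" and t: "\<tau> \<in> Auts" and eq: "\<sigma> \<alpha> = \<tau> \<alpha>"
  shows "\<sigma> = \<tau>"
proof (rule extensionalityI[OF AUT_ext[OF s] AUT_ext[OF t]])
  fix x assume "x \<in> Kk"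
  then have "x \<in> AA" using K_EQ by simp
  then obtain p where p: "Epoly \<rat> p" "x = poly p \<alpha>" unfolding adj_def by blast
  show "\<sigma> x = \<tau> x" using AUT_Q[OF s p(1) alpha_K] AUT_Q[OF t p(1) alpha_K] eq p(2) by simp
qed

lemma AUT_comp: assumes s: "\<sigma> \<in> Auts" and t: "\<tau> \<in> Auts"
  shows "compose Kk \<sigma> \<tau> \<in> Auts"
proof -
  have hs: "fhom Kk \<sigma>" and ht: "fhom Kk \<tau>" using AUT_fhom s t by auto
  have "fhom Kk (\<sigma> \<circ> \<tau>)" unfolding fhom_def
  proof (intro conjI ballI)
    show "(\<sigma> \<circ> \<tau>) 1 = 1" using fh_1[OF K_subf' hs] fh_1[OF K_subf' ht] by simp
    fix x y assume xy: "x \<in> Kk" "y \<in> Kk"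
    have txy: "\<tau> x \<in> Kk" "\<tau> y \<in> Kk" using AUT_into[OF t] xy by auto
    show "(\<sigma> \<circ> \<tau>) (x + y) = (\<sigma> \<circ> \<tau>) x + (\<sigma> \<circ> \<tau>) y"
      using fh_add[OF K_subf' ht xy] fh_add[OF K_subf' hs txy] by simp
    show "(\<sigma> \<circ> \<tau>) (x * y) = (\<sigma> \<circ> \<tau>) x * (\<sigma> \<circ> \<tau>) y"
      using fh_mult[OF K_subf' ht xy] fh_mult[OF K_subf' hs txy] by simp
  qed
  then have "restrict (\<sigma> \<circ> \<tau>) Kk \<in> Auts" by (rule fhom_K_aut[OF f0])
  moreover have "restrict (\<sigma> \<circ> \<tau>) Kk = compose Kk \<sigma> \<tau>" by (simp add: compose_def o_def)
  ultimately show ?thesis by simp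
qed

lemma AUT_root: assumes s: "\<sigma> \<in> Auts" shows "\<sigma> \<alpha> \<in> Rr"
proof -
  have "\<sigma> (poly Fc \<alpha>) = poly Fc (\<sigma> \<alpha>)"
    by (rule AUT_Q[OF s _ alpha_K]) (simp add: Epoly_def coeff_map_poly)
  then show ?thesis using root fh_0[OF K_subf' AUT_fhom[OF s]] by (simp add: int_poly_roots_def)
qed

abbreviation "GG \<equiv> gal_group f"
abbreviation "DD \<equiv> dihedral_group m"

lemma H_hom: "hI \<in> hom GG DD" using iso by (simp add: iso_def)
lemma H_bij: "bij_betw hI Auts (carrier DD)" using iso carrier_gal by (simp add: iso_def)
lemma H_car: "\<sigma> \<in> Auts \<Longrightarrow> hI \<sigma> \<in> carrier DD" by (rule bij_betw_apply[OF H_bij])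
lemma H_inj: "\<sigma> \<in> Auts \<Longrightarrow> \<tau> \<in> Auts \<Longrightarrow> hI \<sigma> = hI \<tau> \<Longrightarrow> \<sigma> = \<tau>"
  using bij_betw_imp_inj_on[OF H_bij] by (rule inj_onD)
lemma H_mult: "\<sigma> \<in> Auts \<Longrightarrow> \<tau> \<in> Auts \<Longrightarrow>
    hI (compose Kk \<sigma> \<tau>) = monoid.mult DD (hI \<sigma>) (hI \<tau>)"
  using H_hom by (simp add: hom_def gal_group_def)

lemma m_pos: "int m > 0" using m3 by simp

lemma id_comp: "compose Kk (restrict id Kk) (restrict id Kk) = restrict id Kk"
  by (rule ext) (simp add: compose_def)

lemma H_id: "hI (restrict id Kk) = (0, False)"
proof -
  obtain a x where e: "hI (restrict id Kk) = (a, x)" by (cases "hI (restrict id Kk)") auto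
  have "(a, x) = monoid.mult DD (a, x) (a, x)"
    using H_mult[OF ID_AUT ID_AUT] id_comp e by simp
  then have ax: "x = False" "(a + a) mod int m = a" by (auto simp: dmul split: if_splits)
  have "a \<in> {0..<int m}" using H_car[OF ID_AUT] e by (simp add: dcar)
  then have "a = 0" using L0[OF m_pos ax(2)] by simp
  then show ?thesis using e ax by simp
qed

lemma compose_apply: "x \<in> Kk \<Longrightarrow> compose Kk \<sigma> \<tau> x = \<sigma> (\<tau> x)"
  by (rule compose_eq)

abbreviation "ZZ \<equiv> int_adjoin \<alpha>"

lemma Z_iff: "x \<in> ZZ \<longleftrightarrow> (\<exists>p. x = poly (map_poly of_int p) \<alpha>)"
  by (auto simp: int_adjoin_def)

lemma Z_add: "x \<in> ZZ \<Longrightarrow> y \<in> ZZ \<Longrightarrow> x + y \<in> ZZ"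
  unfolding Z_iff by (metis mp_of_int_add poly_add)
lemma Z_diff: "x \<in> ZZ \<Longrightarrow> y \<in> ZZ \<Longrightarrow> x - y \<in> ZZ"
  unfolding Z_iff by (metis mp_of_int_diff poly_diff)
lemma Z_mult: "x \<in> ZZ \<Longrightarrow> y \<in> ZZ \<Longrightarrow> x * y \<in> ZZ"
  unfolding Z_iff by (metis mp_of_int_mult poly_mult)
lemma Z_int: "of_int k \<in> ZZ"
  unfolding Z_iff by (intro exI[of _ "[:k:]"]) (simp add: mp_of_int_const)
lemma Z_sc: "x \<in> ZZ \<Longrightarrow> of_int k * x \<in> ZZ"
  by (rule Z_mult[OF Z_int])
lemma Z_alpha: "\<alpha> \<in> ZZ"
  unfolding Z_iff by (intro exI[of _ "[:0, 1:]"]) (simp add: map_poly_pCons)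
lemma Z_poly: "z \<in> ZZ \<Longrightarrow> poly (map_poly of_int q) z \<in> ZZ"
proof (induction q)
  case 0 then show ?case using Z_int[of 0] by simp
next
  case (pCons a q)
  then show ?case by (simp add: map_poly_pCons Z_add Z_mult Z_int)
qed
lemma Z_K: "x \<in> ZZ \<Longrightarrow> x \<in> Kk"
  using mono A_eq K_EQ by auto
lemma Z_algint: "x \<in> ZZ \<Longrightarrow> algebraic_int x"
  using mono by auto
lemma Z_char: "x \<in> Kk \<Longrightarrow> algebraic_int x \<Longrightarrow> x \<in> ZZ"
  using mono A_eq K_EQ by auto

lemma lead_f: "lead_coeff f = 1"
  using g1 by (simp add: fdef lead_coeff_comp)

lemma AUT_Z: assumes s: "\<sigma> \<in> Auts" and x: "x \<in> ZZ" shows "\<sigma> x \<in> ZZ"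
proof -
  have sa: "\<sigma> \<alpha> \<in> Rr" by (rule AUT_root[OF s])
  then have "poly Fc (\<sigma> \<alpha>) = 0" by (simp add: int_poly_roots_def)
  then have "algebraic_int (\<sigma> \<alpha>)" using lead_f algebraic_int_altdef_ipoly by blast
  moreover have "\<sigma> \<alpha> \<in> Kk" using sa R_sub_K[OF f0] by auto
  ultimately have saZ: "\<sigma> \<alpha> \<in> ZZ" by (rule Z_char[rotated])
  obtain p where p: "x = poly (map_poly of_int p) \<alpha>" using x Z_iff by blast
  have "\<sigma> x = poly (map_poly of_int p) (\<sigma> \<alpha>)"
    unfolding p by (rule AUT_Q[OF s Epoly_of_int[OF Rats_subf] alpha_K])
  then show ?thesis using Z_poly[OF saZ] by simp
qed

lemma AUT_add: "\<sigma> \<in> Auts \<Longrightarrow> x \<in> ZZ \<Longrightarrow> y \<in> ZZ \<Longrightarrow> \<sigma> (x + y) = \<sigma> x + \<sigma> y"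
  using fh_add[OF K_subf' AUT_fhom] Z_K by blast
lemma AUT_sc: assumes s: "\<sigma> \<in> Auts" and x: "x \<in> ZZ" shows "\<sigma> (of_int k * x) = of_int k * \<sigma> x"
proof -
  have "\<sigma> (of_int k * x) = \<sigma> (of_int k) * \<sigma> x"
    by (rule fh_mult[OF K_subf' AUT_fhom[OF s] sf_of_int[OF K_subf'] Z_K[OF x]])
  then show ?thesis using fh_of_int[OF K_subf' AUT_fhom[OF s]] by simp
qed

lemma ZINT: assumes z: "z \<in> ZZ" and all: "\<forall>j. \<exists>w\<in>ZZ. z = 2 ^ j * w" shows "z = 0"
proof (rule ccontr)
  assume z0: "z \<noteq> 0"
  have "inverse z \<in> AA" using sf_inverse[OF A_subf] Z_K[OF z] K_EQ by simp
  then obtain p where p: "Epoly \<rat> p" "inverse z = poly p \<alpha>" unfolding adj_def by blast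
  obtain D q where Dq: "D > 0" "smult (of_int D) p = map_poly of_int q" using DEN[OF p(1)] by blast
  define u where "u = of_int D * inverse z"
  have "u = poly (map_poly of_int q) \<alpha>" unfolding u_def p(2) Dq(2)[symmetric] by simp
  then have uZ: "u \<in> ZZ" using Z_iff by blast
  define j where "j = nat D"
  obtain w where w: "w \<in> ZZ" "z = 2 ^ j * w" using all by blast
  have "w * u = of_int D / 2 ^ j" unfolding u_def using w(2) z0 by (simp add: field_simps)
  moreover have "w * u \<in> ZZ" by (rule Z_mult[OF w(1) uZ])
  ultimately have "algebraic_int (of_int D / 2 ^ j :: complex)" using Z_algint by metis
  moreover have "(of_int D / 2 ^ j :: complex) \<in> \<rat>" by simp
  ultimately have "(of_int D / 2 ^ j :: complex) \<in> \<int>" by (rule rational_algebraic_int_is_int)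
  then obtain k where k: "(of_int D / 2 ^ j :: complex) = of_int k" by (elim Ints_cases)
  then have "(of_int D :: complex) = of_int (k * 2 ^ j)" by (simp add: field_simps)
  then have Dk: "D = k * 2 ^ j" by (simp only: of_int_eq_iff)
  then have "k > 0" using Dq(1) by (simp add: zero_less_mult_iff)
  then have "D \<ge> 2 ^ j" using Dk by simp
  moreover have "(2::int) ^ j > D" unfolding j_def using Dq(1)
    by (metis less_exp of_nat_less_iff int_nat_eq of_nat_numeral of_nat_power order_less_le)
  ultimately show False by simp
qed

lemma RHO: "\<exists>\<rho>\<in>Auts. \<rho> \<alpha> = - \<alpha>"
  by (rule AUT_EX[OF neg_R])

context
  fixes \<rho> assumes rA: "\<rho> \<in> Auts" and ra: "\<rho> \<alpha> = - \<alpha>"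
begin

lemma rho_sq: "compose Kk \<rho> \<rho> = restrict id Kk"
proof (rule AUT_det[OF AUT_comp[OF rA rA] ID_AUT])
  have "\<rho> (- \<alpha>) = - \<rho> \<alpha>" by (rule fh_uminus[OF K_subf' AUT_fhom[OF rA] alpha_K])
  then show "compose Kk \<rho> \<rho> \<alpha> = restrict id Kk \<alpha>"
  proof -
    have "compose Kk \<rho> \<rho> \<alpha> = \<rho> (\<rho> \<alpha>)" by (rule compose_apply[OF alpha_K])
    also have "\<dots> = \<alpha>" using ra \<open>\<rho> (- \<alpha>) = - \<rho> \<alpha>\<close> by simp
    finally show ?thesis using alpha_K by simp
  qed
qed

lemma rho_ne: "\<rho> \<noteq> restrict id Kk"
proof
  assume "\<rho> = restrict id Kk"
  then have "\<rho> \<alpha> = \<alpha>" using alpha_K by simp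
  then show False using ra alpha_nz by simp
qed

lemma hrho: "\<exists>a. hI \<rho> = (a, True) \<and> 0 \<le> a \<and> a < int m"
proof -
  obtain a x where e: "hI \<rho> = (a, x)" by (cases "hI \<rho>") auto
  have ar: "0 \<le> a" "a < int m" using H_car[OF rA] e by (auto simp: dcar)
  have "monoid.mult DD (a, x) (a, x) = (0, False)"
    using H_mult[OF rA rA] rho_sq H_id e by simp
  then have sq: "(a + (if x then - a else a)) mod int m = 0" by (simp add: dmul)
  have "x = True"
  proof (rule ccontr)
    assume "x \<noteq> True"
    then have "(a + a) mod int m = 0" using sq by simp
    then have "a = 0" using L1[OF modd _ ar] by simp
    then have "hI \<rho> = hI (restrict id Kk)" using e H_id \<open>x \<noteq> True\<close> by simp
    then show False using H_inj[OF rA ID_AUT] rho_ne by simp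
  qed
  then show ?thesis using e ar by blast
qed

lemma rho_mod2: assumes x: "x \<in> ZZ" shows "\<exists>y\<in>ZZ. \<rho> x = x + 2 * y"
proof -
  obtain p where p: "x = poly (map_poly of_int p) \<alpha>" using x Z_iff by blast
  obtain q where q: "poly (map_poly (of_int :: int \<Rightarrow> complex) p) (- \<alpha>) - poly (map_poly of_int p) \<alpha>
     = 2 * poly (map_poly of_int q) \<alpha>" using NEGP by blast
  have "\<rho> x = poly (map_poly of_int p) (\<rho> \<alpha>)"
    unfolding p by (rule AUT_Q[OF rA Epoly_of_int[OF Rats_subf] alpha_K])
  then have "\<rho> x = x + 2 * poly (map_poly of_int q) \<alpha>" using q ra p by (simp add: algebra_simps)
  moreover have "poly (map_poly of_int q) \<alpha> \<in> ZZ" using Z_iff by blast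
  ultimately show ?thesis by blast
qed

lemma TAU_ex: "0 \<le> a \<Longrightarrow> a < int m \<Longrightarrow> \<exists>\<tau>\<in>Auts. hI \<tau> = ((a + 1) mod int m, True)"
proof -
  assume "0 \<le> a" "a < int m"
  have "((a + 1) mod int m, True) \<in> carrier DD" using m_pos by (simp add: dcar)
  then show ?thesis using bij_betw_imp_surj_on[OF H_bij] by (metis imageE)
qed

context
  fixes a \<tau> assumes ha: "hI \<rho> = (a, True)" "0 \<le> a" "a < int m"
    and tA: "\<tau> \<in> Auts" and ht: "hI \<tau> = ((a + 1) mod int m, True)"
begin

abbreviation "rr \<equiv> compose Kk \<rho> (compose Kk \<tau> (compose Kk \<rho> \<tau>))"

lemma rr_A: "rr \<in> Auts"
  by (intro AUT_comp rA tA)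

lemma h_rr: "hI rr = ((-2) mod int m, False)"
proof -
  define b where "b = (a + 1) mod int m"
  have 1: "hI (compose Kk \<rho> \<tau>) = ((a + - b) mod int m, False)"
    using H_mult[OF rA tA] ha ht by (simp add: dmul b_def)
  have 2: "hI (compose Kk \<tau> (compose Kk \<rho> \<tau>)) = ((b + - ((a + - b) mod int m)) mod int m, True)"
    using H_mult[OF tA AUT_comp[OF rA tA]] 1 ht by (simp add: dmul b_def)
  have 3: "hI rr = ((a + - ((b + - ((a + - b) mod int m)) mod int m)) mod int m, False)"
    using H_mult[OF rA AUT_comp[OF tA AUT_comp[OF rA tA]]] 2 ha by (simp add: dmul)
  show ?thesis using 3 L3[OF m_pos b_def] by simp
qed

lemma tau_sq: "compose Kk \<tau> \<tau> = restrict id Kk"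
proof (rule H_inj[OF AUT_comp[OF tA tA] ID_AUT])
  show "hI (compose Kk \<tau> \<tau>) = hI (restrict id Kk)"
    using H_mult[OF tA tA] ht H_id by (simp add: dmul)
qed

lemma rr_ne: "rr \<noteq> restrict id Kk"
proof
  assume "rr = restrict id Kk"
  then have "hI rr = (0, False)" using H_id by simp
  then show False using h_rr L2[OF m3] by simp
qed

lemma rr_cpow: "cpow Kk rr k \<in> Auts \<and> hI (cpow Kk rr k) = ((int k * ((-2) mod int m)) mod int m, False)"
proof (induction k)
  case 0
  have e: "cpow Kk rr 0 = restrict id Kk" by (rule cpow.simps(1))
  show ?case by (simp only: e ID_AUT H_id) simp
next
  case (Suc k)
  then have "hI (cpow Kk rr (Suc k)) = monoid.mult DD (hI rr) (hI (cpow Kk rr k))"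
    using H_mult[OF rr_A] by simp
  also have "\<dots> = ((int (Suc k) * ((-2) mod int m)) mod int m, False)"
    using Suc h_rr L4[OF m_pos] by (simp add: dmul)
  finally show ?case using AUT_comp[OF rr_A] Suc by simp
qed

lemma rr_pow: "x \<in> Kk \<Longrightarrow> (rr ^^ m) x = x"
proof -
  assume x: "x \<in> Kk"
  have "hI (cpow Kk rr m) = hI (restrict id Kk)"
    using rr_cpow[of m] H_id by simp
  then have "cpow Kk rr m = restrict id Kk" using H_inj rr_cpow ID_AUT by blast
  then show ?thesis using cpow_apply[OF x, of rr m] x by simp
qed


lemma rr_apply: "x \<in> Kk \<Longrightarrow> rr x = \<rho> (\<tau> (\<rho> (\<tau> x)))"
proof -
  assume x: "x \<in> Kk"
  have t: "\<tau> x \<in> Kk" by (rule AUT_into[OF tA x])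
  have rt: "\<rho> (\<tau> x) \<in> Kk" by (rule AUT_into[OF rA t])
  have "rr x = \<rho> (compose Kk \<tau> (compose Kk \<rho> \<tau>) x)" by (rule compose_apply[OF x])
  also have "compose Kk \<tau> (compose Kk \<rho> \<tau>) x = \<tau> (compose Kk \<rho> \<tau> x)" by (rule compose_apply[OF x])
  also have "compose Kk \<rho> \<tau> x = \<rho> (\<tau> x)" by (rule compose_apply[OF x])
  finally show ?thesis .
qed

lemma tau_tau: "x \<in> Kk \<Longrightarrow> \<tau> (\<tau> x) = x"
proof -
  assume x: "x \<in> Kk"
  have "\<tau> (\<tau> x) = compose Kk \<tau> \<tau> x" by (rule compose_apply[OF x, symmetric])
  also have "\<dots> = x" using tau_sq x by simp
  finally show ?thesis .
qed

lemma two_lin: "\<sigma> \<in> Auts \<Longrightarrow> y \<in> ZZ \<Longrightarrow> \<sigma> (2 * y) = 2 * \<sigma> y"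
  using AUT_sc[of \<sigma> y 2] by simp

lemma Z2: "y \<in> ZZ \<Longrightarrow> 2 * y \<in> ZZ"
  using Z_sc[of y 2] by simp

lemma rr_mod2: assumes x: "x \<in> ZZ" shows "\<exists>y\<in>ZZ. rr x - x = 2 * y"
proof -
  have x1: "\<tau> x \<in> ZZ" by (rule AUT_Z[OF tA x])
  obtain y1 where y1: "y1 \<in> ZZ" "\<rho> (\<tau> x) = \<tau> x + 2 * y1" using rho_mod2[OF x1] by blast
  obtain y0 where y0: "y0 \<in> ZZ" "\<rho> x = x + 2 * y0" using rho_mod2[OF x] by blast
  have ty1: "\<tau> y1 \<in> ZZ" by (rule AUT_Z[OF tA y1(1)])
  have "\<tau> (\<rho> (\<tau> x)) = \<tau> (\<tau> x) + \<tau> (2 * y1)"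
    using y1(2) AUT_add[OF tA x1 Z2[OF y1(1)]] by simp
  also have "\<dots> = x + 2 * \<tau> y1" using tau_tau[OF Z_K[OF x]] two_lin[OF tA y1(1)] by simp
  finally have e1: "\<tau> (\<rho> (\<tau> x)) = x + 2 * \<tau> y1" .
  have "rr x = \<rho> (x + 2 * \<tau> y1)" using rr_apply[OF Z_K[OF x]] e1 by simp
  also have "\<dots> = \<rho> x + 2 * \<rho> (\<tau> y1)"
    using AUT_add[OF rA x Z2[OF ty1]] two_lin[OF rA ty1] by simp
  finally have "rr x - x = 2 * (y0 + \<rho> (\<tau> y1))" using y0(2) by (simp add: algebra_simps)
  moreover have "y0 + \<rho> (\<tau> y1) \<in> ZZ" by (rule Z_add[OF y0(1) AUT_Z[OF rA ty1]])
  ultimately show ?thesis by blast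
qed

lemma final_contra: False
proof -
  have all: "\<forall>x\<in>ZZ. \<exists>y\<in>ZZ. rr x - x = 2 ^ Suc j * y" for j
  proof (rule two_adic)
    show "\<And>x y. x \<in> ZZ \<Longrightarrow> y \<in> ZZ \<Longrightarrow> x + y \<in> ZZ" by (rule Z_add)
    show "\<And>k x. x \<in> ZZ \<Longrightarrow> of_int k * x \<in> ZZ" by (rule Z_sc)
    show "\<And>x. x \<in> ZZ \<Longrightarrow> rr x \<in> ZZ" by (rule AUT_Z[OF rr_A])
    show "\<And>x y. x \<in> ZZ \<Longrightarrow> y \<in> ZZ \<Longrightarrow> rr (x + y) = rr x + rr y" by (rule AUT_add[OF rr_A])
    show "\<And>k x. x \<in> ZZ \<Longrightarrow> rr (of_int k * x) = of_int k * rr x" by (rule AUT_sc[OF rr_A])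
    show "\<And>x. x \<in> ZZ \<Longrightarrow> (rr ^^ m) x = x" using rr_pow Z_K by blast
    show "odd m" by (rule modd)
    show "\<And>x. x \<in> ZZ \<Longrightarrow> \<exists>y\<in>ZZ. rr x - x = 2 * y" by (rule rr_mod2)
  qed
  define z where "z = rr \<alpha> - \<alpha>"
  have zZ: "z \<in> ZZ" unfolding z_def by (rule Z_diff[OF AUT_Z[OF rr_A Z_alpha] Z_alpha])
  have "\<forall>j. \<exists>w\<in>ZZ. z = 2 ^ j * w"
  proof
    fix j show "\<exists>w\<in>ZZ. z = 2 ^ j * w"
    proof (cases j)
      case 0 then show ?thesis using zZ by (intro bexI[of _ z]) simp_all
    next
      case (Suc j') then show ?thesis using all[of j'] Z_alpha unfolding z_def by blast
    qed
  qed
  then have "z = 0" by (rule ZINT[OF zZ])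
  then have "rr \<alpha> = restrict id Kk \<alpha>" unfolding z_def using alpha_K by simp
  then have "rr = restrict id Kk" by (rule AUT_det[OF rr_A ID_AUT])
  then show False using rr_ne by simp
qed

end

end

end

theorem lemma4p2:
  fixes m :: nat
  assumes "m \<ge> 3" and "odd m"
  shows "\<not> (\<exists>g :: int poly. lead_coeff g = 1 \<and> degree g = m \<and>
            irreducible (map_poly of_int (pcompose g [:0, 0, 1:]) :: rat poly) \<and>
            monogenic (pcompose g [:0, 0, 1:]) \<and>
            gal_group (pcompose g [:0, 0, 1:]) \<cong> dihedral_group m)"
proof
  assume "\<exists>g :: int poly. lead_coeff g = 1 \<and> degree g = m \<and>
            irreducible (map_poly of_int (pcompose g [:0, 0, 1:]) :: rat poly) \<and>
            monogenic (pcompose g [:0, 0, 1:]) \<and>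
            gal_group (pcompose g [:0, 0, 1:]) \<cong> dihedral_group m"
  then obtain g :: "int poly" where g: "lead_coeff g = 1" "degree g = m"
    "irreducible (map_poly of_int (pcompose g [:0, 0, 1:]) :: rat poly)"
    "monogenic (pcompose g [:0, 0, 1:])" "gal_group (pcompose g [:0, 0, 1:]) \<cong> dihedral_group m"
    by blast
  define f where "f = pcompose g [:0, 0, 1:]"
  have irr: "irreducible (map_poly of_int f :: rat poly)" using g(3) by (simp add: f_def)
  obtain \<alpha> :: complex where root: "poly (map_poly of_int f) \<alpha> = 0"
    and mono: "int_adjoin \<alpha> = {x \<in> rat_adjoin \<alpha>. algebraic_int x}"
    using g(4) unfolding monogenic_def f_def by blast
  obtain hI where iso: "hI \<in> iso (gal_group f) (dihedral_group m)"
    using g(5) unfolding is_iso_def f_def by blast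
  note base = assms(1) assms(2) g(1) g(2) f_def irr root mono iso
  obtain \<rho> where rA: "\<rho> \<in> field_auts (splitting_field f)" and ra: "\<rho> \<alpha> = - \<alpha>"
    using RHO[OF base] by blast
  obtain a where ha: "hI \<rho> = (a, True)" "0 \<le> a" "a < int m"
    using hrho[OF base rA ra] by blast
  obtain \<tau> where tA: "\<tau> \<in> field_auts (splitting_field f)" and ht: "hI \<tau> = ((a + 1) mod int m, True)"
    using TAU_ex[OF base rA ra ha(2,3)] by blast
  show False by (rule final_contra[OF base rA ra ha tA ht])
qed

end
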